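(* Let $\Phi=(V,[q]^V,\mathcal{C})$ be a $(k,d)$-CSP formula with atomic constraints and $h$ a projection scheme satisfying the entropy criterion with parameters $0<\beta<\alpha<1$. If $k\log q\ge\frac1\beta\log(3000q^2d^6k^6)$, then for any $X,Y\in\Sigma$ that differ only at a single variable $v_0\in V$, $$\sum_{v\in V\setminus\{v_0\}}d_{TV}\big(\nu_v^{X_{V\setminus\{v\}}},\nu_v^{Y_{V\setminus\{v\}}}\big)\le\frac12.$$
   Context: A $(k,d)$-CSP formula: variables $V$ all with domain $[q]$, constraints on exactly $k$ variables each, each variable in at most $d$ constraints; atomic means each constraint is violated by exactly one configuration of its variables. $\mu$: uniform distribution over satisfying assignments. Projection scheme $h_v:[q]\to\Sigma_v$, $q_v=q$, $s_v=|\Sigma_v|$, $\Sigma=\bigotimes_v\Sigma_v$. Entropy criterion with $(\alpha,\beta)$: $\lfloor q_v/s_v\rfloor\le|h_v^{-1}(y)|\le\lceil q_v/s_v\rceil$ for all $v,y$; and for each $c$: $\sum_{v\in\mathrm{vbl}(c)}\log\lceil q_v/s_v\rceil\le\alpha\sum_{v\in\mathrm{vbl}(c)}\log q_v$, $\sum_{v\in\mathrm{vbl}(c)}\log\lfloor q_v/s_v\rfloor\ge\beta\sum_{v\in\mathrm{vbl}(c)}\log q_v$. $\nu$ is the distribution of $(h_v(X_v))_v$ for $X\sim\mu$; $\nu_v^{\sigma}$ is the marginal of $\nu$ at $v$ conditioned on the values at $V\setminus\{v\}$ being $\sigma$. $d_{TV}$ is total variation distance. $\log$ base 2. *)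

theory Defs
  imports "HOL-Analysis.Analysis"
begin

text \<open>An atomic CSP formula on variable set V with domain {0..<q}: constraints are indexed
  by a set C; constraint c acts on the variables vbl c and is violated exactly by the
  single configuration forb c restricted to vbl c.\<close>

definition sat_assign ::
  "'v set \<Rightarrow> nat \<Rightarrow> 'c set \<Rightarrow> ('c \<Rightarrow> 'v set) \<Rightarrow> ('c \<Rightarrow> 'v \<Rightarrow> nat) \<Rightarrow> ('v \<Rightarrow> nat) set" where
  "sat_assign V q C vbl forb =
     {x \<in> PiE V (\<lambda>_. {..<q}). \<forall>c\<in>C. \<exists>v\<in>vbl c. x v \<noteq> forb c v}"

definition nu_cond ::
  "'v set \<Rightarrow> nat \<Rightarrow> 'c set \<Rightarrow> ('c \<Rightarrow> 'v set) \<Rightarrow> ('c \<Rightarrow> 'v \<Rightarrow> nat) \<Rightarrow> ('v \<Rightarrow> nat \<Rightarrow> 'y)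
    \<Rightarrow> 'v \<Rightarrow> ('v \<Rightarrow> 'y) \<Rightarrow> 'y \<Rightarrow> real" where
  "nu_cond V q C vbl forb h v \<sigma> y =
     (let A = {x \<in> sat_assign V q C vbl forb. \<forall>u\<in>V - {v}. h u (x u) = \<sigma> u}
      in real (card {x \<in> A. h v (x v) = y}) / real (card A))"

definition dTV_cond ::
  "'v set \<Rightarrow> nat \<Rightarrow> 'c set \<Rightarrow> ('c \<Rightarrow> 'v set) \<Rightarrow> ('c \<Rightarrow> 'v \<Rightarrow> nat) \<Rightarrow> ('v \<Rightarrow> nat \<Rightarrow> 'y)
    \<Rightarrow> ('v \<Rightarrow> 'y set) \<Rightarrow> 'v \<Rightarrow> ('v \<Rightarrow> 'y) \<Rightarrow> ('v \<Rightarrow> 'y) \<Rightarrow> real" where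
  "dTV_cond V q C vbl forb h \<Sigma> v \<sigma> \<tau> =
     (1/2) * (\<Sum>y\<in>\<Sigma> v. \<bar>nu_cond V q C vbl forb h v \<sigma> y - nu_cond V q C vbl forb h v \<tau> y\<bar>)"

end

theory Submission
  imports Defs
begin

definition dep_on :: "('w \<Rightarrow> 'a) set \<Rightarrow> 'w set \<Rightarrow> ('w \<Rightarrow> 'a) set \<Rightarrow> bool" where
  "dep_on P I E \<longleftrightarrow> (\<forall>z\<in>P. \<forall>z'\<in>P. (\<forall>w\<in>I. z w = z' w) \<longrightarrow> (z \<in> E \<longleftrightarrow> z' \<in> E))"

lemma indep_card:
  fixes W :: "'w set" and D :: "'w \<Rightarrow> 'a set"
  assumes finW: "finite W" and finD: "\<And>w. finite (D w)" and IW: "I \<subseteq> W"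
    and E: "E \<subseteq> PiE W D" and F: "F \<subseteq> PiE W D"
    and dE: "dep_on (PiE W D) I E" and dF: "dep_on (PiE W D) (W - I) F"
  shows "card (E \<inter> F) * card (PiE W D) = card E * card F"
proof -
  define R1 where "R1 = PiE I D"
  define R2 where "R2 = PiE (W - I) D"
  define \<phi> :: "('w \<Rightarrow> 'a) \<Rightarrow> ('w \<Rightarrow> 'a) \<times> ('w \<Rightarrow> 'a)" where "\<phi> = (\<lambda>z. (restrict z I, restrict z (W - I)))"
  define \<psi> where "\<psi> = (\<lambda>(a::'w\<Rightarrow>'a, b::'w\<Rightarrow>'a). (\<lambda>w. if w \<in> I then a w else b w))"
  have inj: "inj_on \<phi> (PiE W D)"
  proof (rule inj_onI)
    fix z z' assume z: "z \<in> PiE W D" and z': "z' \<in> PiE W D" and eq: "\<phi> z = \<phi> z'"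
    show "z = z'"
    proof
      fix w
      show "z w = z' w"
      proof (cases "w \<in> W")
        case True
        have e1: "restrict z I = restrict z' I" and e2: "restrict z (W - I) = restrict z' (W - I)"
          using eq unfolding \<phi>_def by auto
        show ?thesis
        proof (cases "w \<in> I")
          case True
          then show ?thesis using fun_cong[OF e1, of w] by simp
        next
          case False
          then show ?thesis using fun_cong[OF e2, of w] \<open>w \<in> W\<close> by simp
        qed
      next
        case False
        then show ?thesis using z z' by (auto simp: PiE_def extensional_def)
      qed
    qed
  qed
  have psiP: "\<psi> (a, b) \<in> PiE W D" if "a \<in> R1" "b \<in> R2" for a b
    using that IW unfolding \<psi>_def R1_def R2_def by (auto simp: PiE_def extensional_def Pi_def)
  have phipsi: "\<phi> (\<psi> (a, b)) = (a, b)" if "a \<in> R1" "b \<in> R2" for a b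
    using that unfolding \<psi>_def \<phi>_def R1_def R2_def
    by (auto simp: restrict_def PiE_def extensional_def fun_eq_iff)
  have agreeI: "\<forall>w\<in>I. \<psi> (restrict e I, b) w = e w" for e b
    unfolding \<psi>_def by auto
  have agreeO: "\<forall>w\<in>W - I. \<psi> (a, restrict f (W - I)) w = f w" for a f
    unfolding \<psi>_def by auto
  define E1 where "E1 = (\<lambda>z. restrict z I) ` E"
  define F2 where "F2 = (\<lambda>z. restrict z (W - I)) ` F"
  have img: "\<phi> ` (E' \<inter> F') = E1' \<times> F2'"
    if E': "E' \<subseteq> PiE W D" and F': "F' \<subseteq> PiE W D"
      and dE': "dep_on (PiE W D) I E'" and dF': "dep_on (PiE W D) (W - I) F'"
      and E1': "E1' = (\<lambda>z. restrict z I) ` E'" and F2': "F2' = (\<lambda>z. restrict z (W - I)) ` F'"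
    for E' F' E1' F2'
  proof
    show "\<phi> ` (E' \<inter> F') \<subseteq> E1' \<times> F2'" unfolding \<phi>_def E1' F2' by auto
  next
    show "E1' \<times> F2' \<subseteq> \<phi> ` (E' \<inter> F')"
    proof
      fix p assume "p \<in> E1' \<times> F2'"
      then obtain e f where e: "e \<in> E'" and f: "f \<in> F'" and p: "p = (restrict e I, restrict f (W - I))"
        unfolding E1' F2' by auto
      have a1: "restrict e I \<in> R1" using e E' IW unfolding R1_def by (auto simp: PiE_def Pi_def)
      have b1: "restrict f (W - I) \<in> R2" using f F' unfolding R2_def by (auto simp: PiE_def Pi_def)
      define z where "z = \<psi> p"
      have zP: "z \<in> PiE W D" unfolding z_def p using psiP a1 b1 by simp
      have "z \<in> E'" using dE' zP e E' agreeI[of e] unfolding dep_on_def z_def p by blast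
      moreover have "z \<in> F'" using dF' zP f F' agreeO[of _ f] unfolding dep_on_def z_def p by blast
      moreover have "\<phi> z = p" unfolding z_def p using phipsi a1 b1 by simp
      ultimately show "p \<in> \<phi> ` (E' \<inter> F')" by blast
    qed
  qed
  have dP: "dep_on (PiE W D) J (PiE W D)" for J unfolding dep_on_def by auto
  define P where "P = PiE W D"
  have cE: "card E = card E1 * card ((\<lambda>z. restrict z (W - I)) ` P)"
  proof -
    have "\<phi> ` (E \<inter> P) = E1 \<times> (\<lambda>z. restrict z (W - I)) ` P"
      by (rule img) (use E dE dP in \<open>auto simp: P_def E1_def\<close>)
    moreover have "E \<inter> P = E" using E P_def by auto
    moreover have "card (\<phi> ` E) = card E" using inj E by (meson card_image inj_on_subset)
    ultimately show ?thesis by (simp add: card_cartesian_product)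
  qed
  have cF: "card F = card ((\<lambda>z. restrict z I) ` P) * card F2"
  proof -
    have "\<phi> ` (P \<inter> F) = (\<lambda>z. restrict z I) ` P \<times> F2"
      by (rule img) (use F dF dP in \<open>auto simp: P_def F2_def\<close>)
    moreover have "P \<inter> F = F" using F P_def by auto
    moreover have "card (\<phi> ` F) = card F" using inj F by (meson card_image inj_on_subset)
    ultimately show ?thesis by (simp add: card_cartesian_product)
  qed
  have cP: "card P = card ((\<lambda>z. restrict z I) ` P) * card ((\<lambda>z. restrict z (W - I)) ` P)"
  proof -
    have "\<phi> ` (P \<inter> P) = (\<lambda>z. restrict z I) ` P \<times> (\<lambda>z. restrict z (W - I)) ` P"
      by (rule img) (use dP in \<open>auto simp: P_def\<close>)
    moreover have "card (\<phi> ` P) = card P" using inj by (simp add: card_image P_def)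
    ultimately show ?thesis by (simp add: card_cartesian_product)
  qed
  have cEF: "card (E \<inter> F) = card E1 * card F2"
  proof -
    have "\<phi> ` (E \<inter> F) = E1 \<times> F2"
      by (rule img) (use E F dE dF in \<open>auto simp: E1_def F2_def\<close>)
    moreover have "card (\<phi> ` (E \<inter> F)) = card (E \<inter> F)" using inj E by (meson card_image inj_on_subset Int_lower1 subset_trans)
    ultimately show ?thesis by (simp add: card_cartesian_product)
  qed
  show ?thesis using cE cF cP cEF unfolding P_def by (simp add: algebra_simps)
qed

locale lll_setting =
  fixes W :: "'w set" and D :: "'w \<Rightarrow> 'a set" and T :: "'t set" and vb :: "'t \<Rightarrow> 'w set"
    and A :: "'t \<Rightarrow> ('w \<Rightarrow> 'a) set" and p :: real and Dg :: nat
  assumes finW: "finite W" and finD: "\<And>w. finite (D w)" and finT: "finite T"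
    and vbW: "\<And>t. t \<in> T \<Longrightarrow> vb t \<subseteq> W"
    and AP: "\<And>t. t \<in> T \<Longrightarrow> A t \<subseteq> PiE W D"
    and Adep: "\<And>t. t \<in> T \<Longrightarrow> dep_on (PiE W D) (vb t) (A t)"
    and Ap: "\<And>t. t \<in> T \<Longrightarrow> real (card (A t)) \<le> p * real (card (PiE W D))"
    and p0: "0 \<le> p" and p4: "p \<le> 1/4"
    and nb: "\<And>t. t \<in> T \<Longrightarrow> card {s\<in>T. s \<noteq> t \<and> vb s \<inter> vb t \<noteq> {}} \<le> Dg"
    and Dgp: "(1 - 2*p)^Dg \<ge> 1/2"
begin

definition GG :: "'t set \<Rightarrow> ('w \<Rightarrow> 'a) set" where
  "GG S = {z \<in> PiE W D. \<forall>t\<in>S. z \<notin> A t}"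

lemma finP: "finite (PiE W D)" using finW finD by (simp add: finite_PiE)

lemma GG_sub: "GG S \<subseteq> PiE W D" unfolding GG_def by auto

lemma GG_fin: "finite (GG S)" using finP GG_sub by (rule finite_subset[rotated])

lemma GG_anti: "S \<subseteq> S' \<Longrightarrow> GG S' \<subseteq> GG S" unfolding GG_def by auto

lemma GG_insert: "GG (insert s S) = GG S - A s" unfolding GG_def by auto

lemma GG_dep:
  assumes "S \<subseteq> T" and "\<And>s. s \<in> S \<Longrightarrow> vb s \<inter> I = {}"
  shows "dep_on (PiE W D) (W - I) (GG S)"
  unfolding dep_on_def
proof (intro ballI impI)
  fix z z' assume z: "z \<in> PiE W D" and z': "z' \<in> PiE W D" and ag: "\<forall>w\<in>W - I. z w = z' w"
  have "z \<in> A s \<longleftrightarrow> z' \<in> A s" if s: "s \<in> S" for s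
  proof -
    have "\<forall>w\<in>vb s. z w = z' w" using ag assms(2)[OF s] vbW[of s] s assms(1) by blast
    then show ?thesis using Adep[of s] s assms(1) z z' unfolding dep_on_def by blast
  qed
  then show "z \<in> GG S \<longleftrightarrow> z' \<in> GG S" unfolding GG_def using z z' by auto
qed

lemma indep_GG:
  assumes "E \<subseteq> PiE W D" "dep_on (PiE W D) I E" "I \<subseteq> W" "S \<subseteq> T"
    and "\<And>s. s \<in> S \<Longrightarrow> vb s \<inter> I = {}"
  shows "card (E \<inter> GG S) * card (PiE W D) = card E * card (GG S)"
  by (rule indep_card[OF finW finD assms(3) assms(1) GG_sub assms(2) GG_dep[OF assms(4,5)]])

lemma step:
  assumes "S \<subseteq> T" "s \<in> T" "s \<notin> S"
    and IH: "real (card (A s \<inter> GG S)) \<le> 2*p*card (GG S)"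
  shows "(1 - 2*p) * card (GG S) \<le> card (GG (insert s S))"
proof -
  have "GG (insert s S) = GG S - (A s \<inter> GG S)" unfolding GG_insert by auto
  then have "card (GG (insert s S)) = card (GG S) - card (A s \<inter> GG S)"
    using GG_fin by (simp add: card_Diff_subset finite_subset)
  moreover have "card (A s \<inter> GG S) \<le> card (GG S)" using GG_fin by (simp add: card_mono)
  ultimately have "real (card (GG (insert s S))) = card (GG S) - real (card (A s \<inter> GG S))"
    by simp
  then show ?thesis using IH by (simp add: algebra_simps)
qed

lemma L:
  "S \<subseteq> T \<Longrightarrow> t \<in> T \<Longrightarrow> t \<notin> S \<Longrightarrow> real (card (A t \<inter> GG S)) \<le> 2*p*card (GG S)"
proof (induction "card S" arbitrary: S t rule: less_induct)
  case less
  note S = less.prems(1) and t = less.prems(2) and tS = less.prems(3)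
  have finS: "finite S" using S finT finite_subset by blast
  define S1 where "S1 = {s\<in>S. vb s \<inter> vb t \<noteq> {}}"
  define S2 where "S2 = S - S1"
  have grow: "(1-2*p)^card R * card (GG S2) \<le> card (GG (S2 \<union> R))"
    if "finite R" "R \<subseteq> S1" for R
    using that
  proof (induction R rule: finite_induct)
    case empty
    then show ?case by simp
  next
    case (insert s R)
    have sS: "s \<in> S" using insert S1_def by auto
    have sub: "S2 \<union> R \<subseteq> S - {s}" using insert S2_def S1_def by auto
    have "S2 \<union> R \<subset> S" using sub sS by auto
    then have "card (S2 \<union> R) < card S" using finS by (rule psubset_card_mono[rotated])
    moreover have "S2 \<union> R \<subseteq> T" using sub S by auto
    moreover have "s \<notin> S2 \<union> R" using sub by auto
    ultimately have IH: "real (card (A s \<inter> GG (S2 \<union> R))) \<le> 2*p*card (GG (S2 \<union> R))"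
      using less.hyps S sS by blast
    have st: "(1 - 2*p) * card (GG (S2 \<union> R)) \<le> card (GG (insert s (S2 \<union> R)))"
      by (rule step) (use IH \<open>S2 \<union> R \<subseteq> T\<close> \<open>s \<notin> S2 \<union> R\<close> S sS in auto)
    have "(1-2*p)^card (insert s R) * card (GG S2) = (1-2*p) * ((1-2*p)^card R * card (GG S2))"
      using insert by simp
    also have "\<dots> \<le> (1-2*p) * card (GG (S2 \<union> R))"
      using insert p4 by (intro mult_left_mono) auto
    also have "\<dots> \<le> card (GG (S2 \<union> insert s R))" using st by simp
    finally show ?case .
  qed
  have S1T: "S1 \<subseteq> {s\<in>T. s \<noteq> t \<and> vb s \<inter> vb t \<noteq> {}}" using S tS S1_def by auto
  have cS1: "card S1 \<le> Dg"
    using order_trans[OF card_mono[OF _ S1T] nb[OF t]] finT by simp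
  have finS1: "finite S1" using finS S1_def by auto
  have SS: "S2 \<union> S1 = S" by (auto simp: S2_def S1_def)
  have g: "(1-2*p)^card S1 * card (GG S2) \<le> card (GG S)"
    using grow[OF finS1 order_refl] SS by simp
  have "(1-2*p)^Dg \<le> (1-2*p)^card S1"
    using cS1 p0 p4 by (intro power_decreasing) auto
  then have half: "1/2 * card (GG S2) \<le> card (GG S)"
  proof -
    have "1/2 * card (GG S2) \<le> (1-2*p)^card S1 * card (GG S2)"
      using Dgp \<open>(1-2*p)^Dg \<le> (1-2*p)^card S1\<close> by (intro mult_right_mono) auto
    then show ?thesis using g by linarith
  qed
  have ind: "card (A t \<inter> GG S2) * card (PiE W D) = card (A t) * card (GG S2)"
    by (rule indep_GG) (use AP[OF t] Adep[OF t] vbW[OF t] S S2_def S1_def in auto)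
  have "real (card (A t \<inter> GG S2)) \<le> p * card (GG S2)"
  proof (cases "card (PiE W D) = 0")
    case True
    then have "PiE W D = {}" using finP by simp
    then show ?thesis using GG_sub by (simp add: subset_empty)
  next
    case False
    have "real (card (A t \<inter> GG S2)) * card (PiE W D) = real (card (A t)) * card (GG S2)"
      using ind by (metis of_nat_mult)
    also have "\<dots> \<le> p * card (PiE W D) * card (GG S2)"
      using Ap[OF t] by (intro mult_right_mono) auto
    finally show ?thesis using False by (simp add: algebra_simps)
  qed
  moreover have "card (A t \<inter> GG S) \<le> card (A t \<inter> GG S2)"
    using GG_anti[of S2 S] S2_def GG_fin by (intro card_mono) auto
  moreover have "p * card (GG S2) \<le> p * (2 * card (GG S))"
    using half p0 by (intro mult_left_mono) auto
  ultimately show ?case by (simp add: algebra_simps)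
qed

lemma M:
  assumes "S \<subseteq> T" "R \<subseteq> T" "S \<inter> R = {}"
  shows "(1-2*p)^card R * card (GG S) \<le> card (GG (S \<union> R))"
proof -
  have "finite R" using assms finT finite_subset by blast
  then show ?thesis using assms(2,3)
  proof (induction R rule: finite_induct)
    case empty then show ?case by simp
  next
    case (insert s R)
    have st: "(1 - 2*p) * card (GG (S \<union> R)) \<le> card (GG (insert s (S \<union> R)))"
      by (rule step) (use insert assms(1) L[of "S \<union> R" s] in auto)
    have "(1-2*p)^card (insert s R) * card (GG S) = (1-2*p) * ((1-2*p)^card R * card (GG S))"
      using insert by simp
    also have "\<dots> \<le> (1-2*p) * card (GG (S \<union> R))"
      using insert p4 by (intro mult_left_mono) auto
    also have "\<dots> \<le> card (GG (S \<union> insert s R))" using st by simp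
    finally show ?case .
  qed
qed

lemma nonempty_bound: "(1-2*p)^card T * card (PiE W D) \<le> card (GG T)"
  using M[of "{}" T] by (simp add: GG_def)

lemma HSS:
  assumes E: "E \<subseteq> PiE W D" and dE: "dep_on (PiE W D) I E" and I: "I \<subseteq> W"
  shows "real (card (E \<inter> GG T)) * card (PiE W D) * (1-2*p)^card {t\<in>T. vb t \<inter> I \<noteq> {}}
          \<le> real (card E) * card (GG T)"
proof -
  define T1 where "T1 = {t\<in>T. vb t \<inter> I \<noteq> {}}"
  define T2 where "T2 = T - T1"
  have ind: "card (E \<inter> GG T2) * card (PiE W D) = card E * card (GG T2)"
    by (rule indep_GG[OF E dE I]) (auto simp: T2_def T1_def)
  have m: "(1-2*p)^card T1 * card (GG T2) \<le> card (GG T)"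
  proof -
    have "T2 \<union> T1 = T" "T2 \<inter> T1 = {}" "T2 \<subseteq> T" "T1 \<subseteq> T" by (auto simp: T1_def T2_def)
    then show ?thesis using M[of T2 T1] by simp
  qed
  have c: "card (E \<inter> GG T) \<le> card (E \<inter> GG T2)"
    using GG_anti[of T2 T] T2_def GG_fin by (intro card_mono) auto
  have pp: "0 \<le> (1-2*p)^card T1" using p4 by simp
  have "real (card (E \<inter> GG T)) * card (PiE W D) * (1-2*p)^card T1
        \<le> real (card (E \<inter> GG T2)) * card (PiE W D) * (1-2*p)^card T1"
    using c pp by (intro mult_right_mono) auto
  also have "\<dots> = real (card E) * (card (GG T2) * (1-2*p)^card T1)"
    using ind by (metis mult.assoc of_nat_mult)
  also have "\<dots> \<le> real (card E) * card (GG T)"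
    using m by (intro mult_left_mono) (auto simp: algebra_simps)
  finally show ?thesis unfolding T1_def .
qed

end

fun cpath :: "('c \<Rightarrow> 'v set) \<Rightarrow> 'c list \<Rightarrow> bool" where
  "cpath vb [] = True"
| "cpath vb [c] = True"
| "cpath vb (c # c' # cs) = (vb c \<inter> vb c' \<noteq> {} \<and> cpath vb (c' # cs))"

lemma cpath_nth: "cpath vb cs \<longleftrightarrow> (\<forall>i. Suc i < length cs \<longrightarrow> vb (cs!i) \<inter> vb (cs!Suc i) \<noteq> {})"
proof (induction vb cs rule: cpath.induct)
  case (3 vb c c' cs)
  show ?case
  proof
    assume "cpath vb (c # c' # cs)"
    then show "\<forall>i. Suc i < length (c # c' # cs) \<longrightarrow> vb ((c # c' # cs) ! i) \<inter> vb ((c # c' # cs) ! Suc i) \<noteq> {}"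
      using 3 by (auto simp: less_Suc_eq_0_disj)
  next
    assume H: "\<forall>i. Suc i < length (c # c' # cs) \<longrightarrow> vb ((c # c' # cs) ! i) \<inter> vb ((c # c' # cs) ! Suc i) \<noteq> {}"
    have a: "vb c \<inter> vb c' \<noteq> {}" using H[rule_format, of 0] by simp
    have "\<forall>i. Suc i < length (c' # cs) \<longrightarrow> vb ((c' # cs) ! i) \<inter> vb ((c' # cs) ! Suc i) \<noteq> {}"
    proof (intro allI impI)
      fix i assume "Suc i < length (c' # cs)"
      then show "vb ((c' # cs) ! i) \<inter> vb ((c' # cs) ! Suc i) \<noteq> {}"
        using H[rule_format, of "Suc i"] by simp
    qed
    then show "cpath vb (c # c' # cs)" using 3 a by simp
  qed
qed auto

lemma cpath_splice:
  assumes P: "cpath vb cs" and ab: "a \<le> b" and b: "b < length cs"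
    and J: "0 < a \<Longrightarrow> vb (cs!(a-1)) \<inter> vb (cs!b) \<noteq> {}"
  shows "cpath vb (take a cs @ drop b cs)"
proof -
  have a: "a < length cs" using ab b by simp
  have lt: "length (take a cs @ drop b cs) = a + (length cs - b)" using a b by simp
  have nth: "(take a cs @ drop b cs) ! i = (if i < a then cs ! i else cs ! (i - a + b))"
    if "i < a + (length cs - b)" for i
    using that a b by (auto simp: nth_append add.commute)
  have Pn: "\<forall>i. Suc i < length cs \<longrightarrow> vb (cs!i) \<inter> vb (cs!Suc i) \<noteq> {}" using P cpath_nth by blast
  show ?thesis unfolding cpath_nth
  proof (intro allI impI)
    fix i assume i: "Suc i < length (take a cs @ drop b cs)"
    then have i': "Suc i < a + (length cs - b)" using lt by simp
    consider "Suc i < a" | "Suc i = a" | "a \<le> i" by linarith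
    then show "vb ((take a cs @ drop b cs) ! i) \<inter> vb ((take a cs @ drop b cs) ! Suc i) \<noteq> {}"
    proof cases
      case 1
      then show ?thesis using nth[of i] nth[of "Suc i"] i' Pn a by auto
    next
      case 2
      then show ?thesis using nth[of i] nth[of "Suc i"] i' J by auto
    next
      case 3
      have e: "Suc i - a + b = Suc (i - a + b)" using 3 by simp
      have "Suc (i - a + b) < length cs" using i' 3 b by linarith
      then show ?thesis using nth[of i] nth[of "Suc i"] i' 3 Pn e by auto
    qed
  qed
qed

definition chains :: "('c \<Rightarrow> 'v set) \<Rightarrow> 'c set \<Rightarrow> 'v \<Rightarrow> 'c list set" where
  "chains vb C v0 = {rs. rs \<noteq> [] \<and> set rs \<subseteq> C \<and> v0 \<in> vb (last rs) \<and> cpath vb rs}"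

definition csep :: "('c \<Rightarrow> 'v set) \<Rightarrow> 'c list \<Rightarrow> bool" where
  "csep vb rs \<longleftrightarrow> (\<forall>i j. i < j \<longrightarrow> j < length rs \<longrightarrow>
      rs!i \<noteq> rs!j \<and> (Suc i < j \<longrightarrow> vb (rs!i) \<inter> vb (rs!j) = {}))"

lemma splice_chain:
  assumes rs: "rs \<in> chains vb C v0" and ab: "a \<le> b" and b: "b < length rs"
    and J: "0 < a \<Longrightarrow> vb (rs!(a-1)) \<inter> vb (rs!b) \<noteq> {}"
    and h: "a = 0 \<Longrightarrow> rs!b = rs!0"
  shows "take a rs @ drop b rs \<in> chains vb C v0"
    and "hd (take a rs @ drop b rs) = hd rs"
    and "set (take a rs @ drop b rs) \<subseteq> set rs"
proof -
  have ne: "drop b rs \<noteq> []" using b by simp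
  have "cpath vb (take a rs @ drop b rs)"
    using cpath_splice[OF _ ab b J] rs unfolding chains_def by auto
  moreover have "last (take a rs @ drop b rs) = last rs" using ne b by (simp add: last_drop)
  moreover have st: "set (take a rs @ drop b rs) \<subseteq> set rs"
    using set_take_subset set_drop_subset by fastforce
  ultimately show "take a rs @ drop b rs \<in> chains vb C v0"
    using rs ne unfolding chains_def by auto
  show "hd (take a rs @ drop b rs) = hd rs"
  proof (cases "a = 0")
    case True
    have "rs \<noteq> []" using b by auto
    then show ?thesis using True h ne b by (simp add: hd_drop_conv_nth hd_conv_nth)
  next
    case False
    then show ?thesis using ab b by (simp add: hd_append hd_conv_nth)
  qed
  show "set (take a rs @ drop b rs) \<subseteq> set rs" by (rule st)
qed

lemma minimal_chain:
  assumes "rs \<in> chains vb C v0" "set rs \<subseteq> Q" "v \<in> vb (hd rs)"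
  shows "\<exists>rs. rs \<in> chains vb C v0 \<and> set rs \<subseteq> Q \<and> v \<in> vb (hd rs) \<and> csep vb rs"
proof -
  define P where "P = (\<lambda>rs. rs \<in> chains vb C v0 \<and> set rs \<subseteq> Q \<and> v \<in> vb (hd rs))"
  have "P rs" using assms P_def by auto
  then obtain r where r: "P r" and min: "\<And>r'. P r' \<Longrightarrow> length r \<le> length r'"
    using ex_has_least_nat[of P rs length] by blast
  have rc: "r \<in> chains vb C v0" using r P_def by auto
  have Pn: "\<forall>i. Suc i < length r \<longrightarrow> vb (r!i) \<inter> vb (r!Suc i) \<noteq> {}"
    using rc cpath_nth unfolding chains_def by blast
  have "csep vb r" unfolding csep_def
  proof (intro allI impI conjI)
    fix i j assume ij: "i < j" and j: "j < length r"
    show "r ! i \<noteq> r ! j"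
    proof
      assume eq: "r ! i = r ! j"
      define r' where "r' = take i r @ drop j r"
      have J: "0 < i \<Longrightarrow> vb (r!(i-1)) \<inter> vb (r!j) \<noteq> {}"
        using Pn[rule_format, of "i-1"] eq ij j by auto
      have h: "i = 0 \<Longrightarrow> r!j = r!0" using eq by simp
      note sc = splice_chain[OF rc _ j J h]
      have "P r'" using sc ij r unfolding P_def r'_def by auto
      moreover have "length r' < length r" using ij j unfolding r'_def by simp
      ultimately show False using min by fastforce
    qed
  next
    fix i j assume ij: "i < j" and j: "j < length r" and sij: "Suc i < j"
    show "vb (r ! i) \<inter> vb (r ! j) = {}"
    proof (rule ccontr)
      assume ne: "vb (r ! i) \<inter> vb (r ! j) \<noteq> {}"
      define r' where "r' = take (Suc i) r @ drop j r"
      note sc = splice_chain[of r vb C v0 "Suc i" j, OF rc _ j]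
      have "P r'" using sc sij ne r unfolding P_def r'_def by auto
      moreover have "length r' < length r" using sij j unfolding r'_def by simp
      ultimately show False using min by fastforce
    qed
  qed
  then show ?thesis using r P_def by auto
qed

lemma card_even_less: "card {i. i < n \<and> even i} = (n + 1) div 2"
proof (induction n)
  case 0 then show ?case by simp
next
  case (Suc n)
  show ?case
  proof (cases "even n")
    case True
    have "{i. i < Suc n \<and> even i} = insert n {i. i < n \<and> even i}" using True by (auto simp: less_Suc_eq)
    then show ?thesis using Suc True by (simp add: card_insert_if)
  next
    case False
    have "{i. i < Suc n \<and> even i} = {i. i < n \<and> even i}" using False by (auto simp: less_Suc_eq)
    then show ?thesis using Suc False by simp
  qed
qed

lemma chains_count:
  fixes vb :: "'c \<Rightarrow> 'v set"
  assumes finC: "finite C" and deg: "\<And>w. card {c\<in>C. w \<in> vb c} \<le> d"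
    and kk: "\<And>c. c \<in> C \<Longrightarrow> card (vb c) \<le> k"
    and finvb: "\<And>c. c \<in> C \<Longrightarrow> finite (vb c)"
  shows "card {rs \<in> chains vb C v0. length rs = Suc n} \<le> d * (k*d)^n"
proof (induction n)
  case 0
  have "{rs \<in> chains vb C v0. length rs = Suc 0} \<subseteq> (\<lambda>c. [c]) ` {c\<in>C. v0 \<in> vb c}"
  proof
    fix rs assume "rs \<in> {rs \<in> chains vb C v0. length rs = Suc 0}"
    then obtain c where "rs = [c]" "c \<in> C" "v0 \<in> vb c" unfolding chains_def
      by (auto simp: length_Suc_conv)
    then show "rs \<in> (\<lambda>c. [c]) ` {c\<in>C. v0 \<in> vb c}" by auto
  qed
  then have "card {rs \<in> chains vb C v0. length rs = Suc 0} \<le> card ((\<lambda>c. [c]) ` {c\<in>C. v0 \<in> vb c})"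
    using finC by (intro card_mono) auto
  also have "\<dots> \<le> card {c\<in>C. v0 \<in> vb c}" by (rule card_image_le) (use finC in auto)
  also have "\<dots> \<le> d" by (rule deg)
  finally show ?case by simp
next
  case (Suc n)
  define Ch where "Ch = {rs \<in> chains vb C v0. length rs = Suc n}"
  define N where "N = (\<lambda>rs. {c\<in>C. vb c \<inter> vb (hd rs) \<noteq> {}})"
  have finCh: "finite Ch"
  proof -
    have "Ch \<subseteq> {rs. set rs \<subseteq> C \<and> length rs = Suc n}" unfolding Ch_def chains_def by auto
    then show ?thesis using finite_lists_length_eq[OF finC] finite_subset by blast
  qed
  have sub: "{rs \<in> chains vb C v0. length rs = Suc (Suc n)} \<subseteq> (\<lambda>(rs, c). c # rs) ` (SIGMA rs:Ch. N rs)"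
  proof
    fix rs assume "rs \<in> {rs \<in> chains vb C v0. length rs = Suc (Suc n)}"
    then obtain c c' r where rs: "rs = c # c' # r" and ch: "rs \<in> chains vb C v0" and l: "length r = n"
      by (auto simp: length_Suc_conv)
    have "c' # r \<in> Ch" using ch l unfolding Ch_def chains_def rs by auto
    moreover have "c \<in> N (c' # r)" using ch unfolding N_def chains_def rs by auto
    ultimately show "rs \<in> (\<lambda>(rs, c). c # rs) ` (SIGMA rs:Ch. N rs)" using rs by force
  qed
  have cN: "card (N rs) \<le> k * d" if "rs \<in> Ch" for rs
  proof -
    have hC: "hd rs \<in> C" using that unfolding Ch_def chains_def by (auto intro: hd_in_set)
    have "N rs = (\<Union>w\<in>vb (hd rs). {c\<in>C. w \<in> vb c})" unfolding N_def by auto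
    have fv: "finite (vb (hd rs))" using finvb[OF hC] .
    then have "card (N rs) \<le> (\<Sum>w\<in>vb (hd rs). card {c\<in>C. w \<in> vb c})"
      using \<open>N rs = _\<close> card_UN_le[OF fv, of "\<lambda>w. {c\<in>C. w \<in> vb c}"] by simp
    also have "\<dots> \<le> (\<Sum>w\<in>vb (hd rs). d)" by (intro sum_mono deg)
    also have "\<dots> = card (vb (hd rs)) * d" by simp
    also have "\<dots> \<le> k * d" using kk[OF hC] by simp
    finally show ?thesis .
  qed
  have finN: "finite (N rs)" for rs using finC unfolding N_def by auto
  have "card {rs \<in> chains vb C v0. length rs = Suc (Suc n)} \<le> card ((\<lambda>(rs, c). c # rs) ` (SIGMA rs:Ch. N rs))"
    using sub finCh finN by (intro card_mono) auto
  also have "\<dots> \<le> card (SIGMA rs:Ch. N rs)" by (rule card_image_le) (use finCh finN in auto)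
  also have "\<dots> = (\<Sum>rs\<in>Ch. card (N rs))" using finCh finN by (simp add: card_SigmaI)
  also have "\<dots> \<le> (\<Sum>rs\<in>Ch. k * d)" using cN by (intro sum_mono) auto
  also have "\<dots> = card Ch * (k * d)" by simp
  also have "\<dots> \<le> d * (k*d)^n * (k * d)" using Suc Ch_def by (intro mult_right_mono) auto
  finally show ?case by (simp add: algebra_simps)
qed

locale csp_setting =
  fixes V :: "'v set" and q k d :: nat and C :: "'c set"
    and vbl :: "'c \<Rightarrow> 'v set" and forb :: "'c \<Rightarrow> 'v \<Rightarrow> nat"
    and h :: "'v \<Rightarrow> nat \<Rightarrow> 'y" and \<Sigma> :: "'v \<Rightarrow> 'y set"
    and \<alpha> \<beta> :: real and X Y :: "'v \<Rightarrow> 'y" and v0 :: 'v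
  assumes finV: "finite V" and finC: "finite C"
    and vbl_sub: "\<And>c. c \<in> C \<Longrightarrow> vbl c \<subseteq> V"
    and vbl_card: "\<And>c. c \<in> C \<Longrightarrow> card (vbl c) = k"
    and forb_dom: "\<And>c v. c \<in> C \<Longrightarrow> v \<in> vbl c \<Longrightarrow> forb c v < q"
    and deg: "\<And>v. v \<in> V \<Longrightarrow> card {c \<in> C. v \<in> vbl c} \<le> d"
    and proj: "\<And>v. v \<in> V \<Longrightarrow> h v ` {..<q} = \<Sigma> v"
    and fiber: "\<And>v y. v \<in> V \<Longrightarrow> y \<in> \<Sigma> v \<Longrightarrow>
        q div card (\<Sigma> v) \<le> card {a \<in> {..<q}. h v a = y} \<and>
        real (card {a \<in> {..<q}. h v a = y}) \<le> real_of_int \<lceil>real q / real (card (\<Sigma> v))\<rceil>"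
    and ent_low: "\<And>c. c \<in> C \<Longrightarrow>
        (\<Sum>v\<in>vbl c. log 2 (real (q div card (\<Sigma> v))))
          \<ge> \<beta> * (\<Sum>v\<in>vbl c. log 2 (real q))"
    and \<beta>pos: "0 < \<beta>"
    and cond: "real k * log 2 (real q)
        \<ge> (1 / \<beta>) * log 2 (3000 * real q ^ 2 * real d ^ 6 * real k ^ 6)"
    and X: "X \<in> PiE V \<Sigma>" and Y: "Y \<in> PiE V \<Sigma>"
    and v0: "v0 \<in> V" and XY: "\<And>u. u \<in> V - {v0} \<Longrightarrow> X u = Y u"
    and kpos: "C \<noteq> {} \<Longrightarrow> 1 \<le> k"
begin

definition LL :: "'v \<Rightarrow> nat" where "LL u = q div card (\<Sigma> u)"
definition K0 :: real where "K0 = 3000 * real q ^ 2 * real d ^ 6 * real k ^ 6"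

lemma Sigma_fin: "u \<in> V \<Longrightarrow> finite (\<Sigma> u)" using proj[of u] by (metis finite_imageI finite_lessThan)

lemma Sigma_card: "u \<in> V \<Longrightarrow> card (\<Sigma> u) \<le> q"
  using proj[of u] card_image_le[of "{..<q}" "h u"] by simp

lemma X_in: "u \<in> V \<Longrightarrow> X u \<in> \<Sigma> u" using X by (auto simp: PiE_def Pi_def)
lemma Y_in: "u \<in> V \<Longrightarrow> Y u \<in> \<Sigma> u" using Y by (auto simp: PiE_def Pi_def)

lemma q_pos: "1 \<le> q"
proof -
  have "X v0 \<in> h v0 ` {..<q}" using X_in[OF v0] proj[OF v0] by simp
  then show ?thesis by (cases q) auto
qed

lemma Sigma_card_pos: "u \<in> V \<Longrightarrow> 1 \<le> card (\<Sigma> u)"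
proof -
  assume u: "u \<in> V"
  have "X u \<in> \<Sigma> u" using X_in[OF u] .
  then have "\<Sigma> u \<noteq> {}" by auto
  then show ?thesis using Sigma_fin[OF u] by (simp add: Suc_leI card_gt_0_iff)
qed

lemma LL_pos: "u \<in> V \<Longrightarrow> 1 \<le> LL u"
  unfolding LL_def using Sigma_card[of u] Sigma_card_pos[of u] q_pos
  by (simp add: div_greater_zero_iff Suc_le_eq)

lemma LL_le: "u \<in> V \<Longrightarrow> LL u \<le> q" unfolding LL_def by simp

lemma d_pos: "c \<in> C \<Longrightarrow> 1 \<le> d"
proof -
  assume c: "c \<in> C"
  have "1 \<le> k" using kpos c by auto
  then have "vbl c \<noteq> {}" using vbl_card[OF c] by auto
  then obtain w where w: "w \<in> vbl c" by auto
  then have wV: "w \<in> V" using vbl_sub[OF c] by auto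
  have "c \<in> {c \<in> C. w \<in> vbl c}" using c w by auto
  then have "1 \<le> card {c \<in> C. w \<in> vbl c}" using finC by (metis (no_types, lifting) One_nat_def Suc_leI card_gt_0_iff empty_iff finite_subset mem_Collect_eq subsetI)
  then show ?thesis using deg[OF wV] by simp
qed

lemma log_sum_prod: "finite S \<Longrightarrow> (\<And>i. i \<in> S \<Longrightarrow> 0 < f i) \<Longrightarrow> (\<Sum>i\<in>S. log 2 (f i)) = log 2 (\<Prod>i\<in>S. f i)"
  by (induction S rule: finite_induct) (auto simp: log_mult_pos prod_pos)

lemma main_facts:
  assumes c: "c \<in> C"
  shows "2 \<le> q" and "1 \<le> d" and "1 \<le> k" and "0 < K0" and "K0 \<le> (\<Prod>u\<in>vbl c. real (LL u))"
proof -
  show k1: "1 \<le> k" using kpos c by auto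
  show d1: "1 \<le> d" using d_pos[OF c] .
  have finvc: "finite (vbl c)" using vbl_sub[OF c] finV finite_subset by blast
  have Kpos: "0 < K0" unfolding K0_def using k1 d1 q_pos by simp
  then show "0 < K0" .
  have q2: "2 \<le> q"
  proof (rule ccontr)
    assume "\<not> 2 \<le> q"
    then have "q = 1" using q_pos by simp
    then have "(1 / \<beta>) * log 2 K0 \<le> 0" using cond unfolding K0_def by simp
    moreover have "1 < K0" unfolding K0_def using k1 d1 \<open>q = 1\<close>
    proof -
      have "(1::real) \<le> real d ^ 6" "(1::real) \<le> real k ^ 6" using k1 d1 by (simp_all add: one_le_power)
      then have "(1::real) \<le> real d ^ 6 * real k ^ 6" by (metis mult_mono' mult_1 zero_le_one)
      then show "1 < 3000 * real q ^ 2 * real d ^ 6 * real k ^ 6" using \<open>q = 1\<close> by simp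
    qed
    then have "0 < log 2 K0" by simp
    ultimately show False using \<beta>pos by (simp add: divide_le_0_iff mult_le_0_iff)
  qed
  then show "2 \<le> q" .
  have s1: "(\<Sum>v\<in>vbl c. log 2 (real q)) = k * log 2 (real q)" using vbl_card[OF c] by simp
  have "log 2 K0 \<le> \<beta> * (k * log 2 (real q))"
  proof -
    have "log 2 K0 = \<beta> * ((1/\<beta>) * log 2 K0)" using \<beta>pos by simp
    also have "\<dots> \<le> \<beta> * (k * log 2 (real q))" using cond \<beta>pos unfolding K0_def
      by (intro mult_left_mono) auto
    finally show ?thesis .
  qed
  also have "\<dots> \<le> (\<Sum>v\<in>vbl c. log 2 (real (LL v)))" using ent_low[OF c] s1 vbl_card[OF c] unfolding LL_def by simp
  also have "\<dots> = log 2 (\<Prod>v\<in>vbl c. real (LL v))"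
    by (rule log_sum_prod[OF finvc]) (use LL_pos vbl_sub[OF c] in force)
  finally have "log 2 K0 \<le> log 2 (\<Prod>v\<in>vbl c. real (LL v))" .
  moreover have "0 < (\<Prod>v\<in>vbl c. real (LL v))"
    using LL_pos vbl_sub[OF c] by (intro prod_pos) force
  ultimately show "K0 \<le> (\<Prod>u\<in>vbl c. real (LL u))" using Kpos by simp
qed

end

lemma prod_ratio:
  fixes B D :: "'w \<Rightarrow> 'a set" and r :: "'w \<Rightarrow> real"
  assumes W: "finite W" and J: "J \<subseteq> W"
    and out: "\<And>u. u \<in> W - J \<Longrightarrow> B u = D u"
    and inn: "\<And>u. u \<in> J \<Longrightarrow> real (card (B u)) \<le> r u * card (D u)"
    and r0: "\<And>u. u \<in> J \<Longrightarrow> 0 \<le> r u"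
  shows "real (card (PiE W B)) \<le> (\<Prod>u\<in>J. r u) * card (PiE W D)"
proof -
  have "real (card (PiE W B)) = (\<Prod>u\<in>W. real (card (B u)))" using W by (simp add: card_PiE)
  also have "\<dots> \<le> (\<Prod>u\<in>W. (if u \<in> J then r u else 1) * real (card (D u)))"
    by (intro prod_mono) (use out inn in auto)
  also have "\<dots> = (\<Prod>u\<in>W. (if u \<in> J then r u else 1)) * (\<Prod>u\<in>W. real (card (D u)))"
    by (rule prod.distrib)
  also have "(\<Prod>u\<in>W. (if u \<in> J then r u else 1)) = (\<Prod>u\<in>J. r u)"
    using J W by (simp add: prod.If_cases Int_absorb1)
  also have "(\<Prod>u\<in>W. real (card (D u))) = card (PiE W D)" using W by (simp add: card_PiE)
  finally show ?thesis .
qed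

context csp_setting begin

definition DX :: "'v \<Rightarrow> 'v \<Rightarrow> nat set" where
  "DX v u = (if u = v then {..<q} else {a \<in> {..<q}. h u a = X u})"
definition DY :: "'v \<Rightarrow> 'v \<Rightarrow> nat set" where
  "DY v u = (if u = v then {..<q} else {a \<in> {..<q}. h u a = Y u})"
definition D2 :: "'v \<Rightarrow> 'v \<Rightarrow> (nat \<times> nat) set" where
  "D2 v u = DX v u \<times> DY v u"
definition sel :: "bool \<Rightarrow> nat \<times> nat \<Rightarrow> nat" where
  "sel b p = (if b then fst p else snd p)"
definition AT :: "'v \<Rightarrow> 'c \<times> bool \<Rightarrow> ('v \<Rightarrow> nat \<times> nat) set" where
  "AT v t = {z \<in> PiE V (D2 v). \<forall>w\<in>vbl (fst t). sel (snd t) (z w) = forb (fst t) w}"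
definition TT :: "('c \<times> bool) set" where "TT = C \<times> UNIV"
definition pp :: real where "pp = 1 / K0"
definition Gv :: "'v \<Rightarrow> ('v \<Rightarrow> nat \<times> nat) set" where
  "Gv v = {z \<in> PiE V (D2 v). \<forall>t\<in>TT. z \<notin> AT v t}"
definition SX :: "'v \<Rightarrow> ('v \<Rightarrow> nat) set" where
  "SX v = {x \<in> sat_assign V q C vbl forb. \<forall>u\<in>V - {v}. h u (x u) = X u}"
definition SY :: "'v \<Rightarrow> ('v \<Rightarrow> nat) set" where
  "SY v = {x \<in> sat_assign V q C vbl forb. \<forall>u\<in>V - {v}. h u (x u) = Y u}"

lemma DX_fin: "finite (DX v u)" unfolding DX_def by auto
lemma DY_fin: "finite (DY v u)" unfolding DY_def by auto
lemma D2_fin: "finite (D2 v u)" unfolding D2_def using DX_fin DY_fin by auto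

lemma DX_card: "u \<in> V \<Longrightarrow> LL u \<le> card (DX v u)"
  unfolding DX_def using fiber[OF _ X_in] LL_le by (auto simp: LL_def)
lemma DY_card: "u \<in> V \<Longrightarrow> LL u \<le> card (DY v u)"
  unfolding DY_def using fiber[OF _ Y_in] LL_le by (auto simp: LL_def)
lemma DX_cpos: assumes u: "u \<in> V" shows "0 < card (DX v u)"
proof -
  have "1 \<le> card (DX v u)" using DX_card[OF u, of v] LL_pos[OF u] by linarith
  then show ?thesis by simp
qed
lemma DY_cpos: assumes u: "u \<in> V" shows "0 < card (DY v u)"
proof -
  have "1 \<le> card (DY v u)" using DY_card[OF u, of v] LL_pos[OF u] by linarith
  then show ?thesis by simp
qed

lemma DXY_eq: "u \<in> V \<Longrightarrow> u \<noteq> v0 \<Longrightarrow> DX v u = DY v u"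
  unfolding DX_def DY_def using XY by auto

lemma N_card: "c \<in> C \<Longrightarrow> card {c'\<in>C. vbl c' \<inter> vbl c \<noteq> {}} \<le> k * d"
proof -
  assume c: "c \<in> C"
  have fv: "finite (vbl c)" using vbl_sub[OF c] finV finite_subset by blast
  have "{c'\<in>C. vbl c' \<inter> vbl c \<noteq> {}} = (\<Union>w\<in>vbl c. {c'\<in>C. w \<in> vbl c'})" by auto
  then have "card {c'\<in>C. vbl c' \<inter> vbl c \<noteq> {}} \<le> (\<Sum>w\<in>vbl c. card {c'\<in>C. w \<in> vbl c'})"
    using card_UN_le[OF fv, of "\<lambda>w. {c'\<in>C. w \<in> vbl c'}"] by simp
  also have "\<dots> \<le> (\<Sum>w\<in>vbl c. d)" using deg vbl_sub[OF c] by (intro sum_mono) auto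
  also have "\<dots> = k * d" using vbl_card[OF c] by simp
  finally show ?thesis .
qed

lemma K0_cases: "K0 = 0 \<or> 3000 \<le> K0"
proof (cases "d = 0 \<or> k = 0")
  case True then show ?thesis unfolding K0_def by auto
next
  case False
  then have "1 \<le> q ^ 2 * d ^ 6 * k ^ 6" using q_pos by (simp add: Suc_le_eq)
  then have "real 1 \<le> real (q ^ 2 * d ^ 6 * k ^ 6)" by (rule of_nat_mono)
  then have "(1::real) \<le> real q ^ 2 * real d ^ 6 * real k ^ 6" by simp
  then show ?thesis unfolding K0_def by simp
qed

lemma pp_bounds: "0 \<le> pp" "pp \<le> 1/4" "4 * real (k * d) * pp \<le> 1/2"
proof -
  show "0 \<le> pp" unfolding pp_def K0_def by simp
  show "pp \<le> 1/4" using K0_cases unfolding pp_def by auto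
  show "4 * real (k * d) * pp \<le> 1/2"
  proof (cases "K0 = 0")
    case True then show ?thesis unfolding pp_def by simp
  next
    case False
    then have kd: "1 \<le> k" "1 \<le> d" unfolding K0_def by auto
    have "real (k * d) \<le> real q ^ 2 * real d ^ 6 * real k ^ 6"
    proof -
      have "real k \<le> real k ^ 6" "real d \<le> real d ^ 6" "(1::real) \<le> real q ^ 2"
        using kd q_pos by (simp_all add: one_le_power power_increasing[of 1 6, simplified])
      then have "real k * real d \<le> real k ^ 6 * real d ^ 6" using kd by (intro mult_mono) auto
      also have "\<dots> = 1 * (real k ^ 6 * real d ^ 6)" by simp
      also have "\<dots> \<le> real q ^ 2 * (real k ^ 6 * real d ^ 6)"
        using \<open>(1::real) \<le> real q ^ 2\<close> by (intro mult_right_mono) auto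
      finally show ?thesis by (simp add: algebra_simps)
    qed
    then have "4 * real (k * d) \<le> 4 * (real q ^ 2 * real d ^ 6 * real k ^ 6)" by simp
    also have "\<dots> \<le> K0 / 2" unfolding K0_def by simp
    finally have "4 * real (k * d) \<le> K0 / 2" .
    then show ?thesis using False K0_cases unfolding pp_def by (simp add: field_simps)
  qed
qed

end

context csp_setting begin
lemma AT_PiE: assumes c: "c \<in> C"
  shows "AT v (c, b) = PiE V (\<lambda>u. if u \<in> vbl c then {p \<in> D2 v u. sel b p = forb c u} else D2 v u)"
proof (intro set_eqI iffI)
  fix z assume "z \<in> AT v (c, b)"
  then have z: "z \<in> PiE V (D2 v)" "\<forall>w\<in>vbl c. sel b (z w) = forb c w" unfolding AT_def by auto
  then show "z \<in> PiE V (\<lambda>u. if u \<in> vbl c then {p \<in> D2 v u. sel b p = forb c u} else D2 v u)"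
    by (auto simp: PiE_iff)
next
  fix z assume "z \<in> PiE V (\<lambda>u. if u \<in> vbl c then {p \<in> D2 v u. sel b p = forb c u} else D2 v u)"
  then have z: "\<And>u. u \<in> V \<Longrightarrow> z u \<in> (if u \<in> vbl c then {p \<in> D2 v u. sel b p = forb c u} else D2 v u)"
    and e: "z \<in> extensional V" by (auto simp: PiE_iff)
  have "z \<in> PiE V (D2 v)"
  proof -
    have "z u \<in> D2 v u" if "u \<in> V" for u using z[OF that] by (auto split: if_splits)
    then show ?thesis using e by (auto simp: PiE_iff)
  qed
  moreover have "sel b (z w) = forb c w" if "w \<in> vbl c" for w
    using z[of w] that vbl_sub[OF c] by auto
  ultimately show "z \<in> AT v (c, b)" unfolding AT_def by auto
qed

lemma sel_card: "u \<in> V \<Longrightarrow> real (card {p \<in> D2 v u. sel b p = f}) \<le> (1 / card (if b then DX v u else DY v u)) * card (D2 v u)"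
proof -
  assume u: "u \<in> V"
  have px: "0 < card (DX v u)" "0 < card (DY v u)" using DX_cpos[OF u] DY_cpos[OF u] by auto
  show ?thesis
  proof (cases b)
    case True
    have "{p \<in> D2 v u. sel b p = f} \<subseteq> {f} \<times> DY v u" using True unfolding D2_def sel_def by auto
    then have "card {p \<in> D2 v u. sel b p = f} \<le> card ({f} \<times> DY v u)"
      using DY_fin by (intro card_mono) auto
    then have "real (card {p \<in> D2 v u. sel b p = f}) \<le> card (DY v u)" by (simp add: card_cartesian_product)
    then show ?thesis using True px unfolding D2_def by (simp add: card_cartesian_product field_simps)
  next
    case False
    have "{p \<in> D2 v u. sel b p = f} \<subseteq> DX v u \<times> {f}" using False unfolding D2_def sel_def by auto
    then have "card {p \<in> D2 v u. sel b p = f} \<le> card (DX v u \<times> {f})"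
      using DX_fin by (intro card_mono) auto
    then have "real (card {p \<in> D2 v u. sel b p = f}) \<le> card (DX v u)" by (simp add: card_cartesian_product)
    then show ?thesis using False px unfolding D2_def by (simp add: card_cartesian_product field_simps)
  qed
qed

lemma AT_card: assumes c: "c \<in> C" shows "real (card (AT v (c, b))) \<le> pp * card (PiE V (D2 v))"
proof -
  define r where "r = (\<lambda>u. 1 / real (card (if b then DX v u else DY v u)))"
  have "real (card (AT v (c, b))) \<le> (\<Prod>u\<in>vbl c. r u) * card (PiE V (D2 v))"
    unfolding AT_PiE[OF c]
  proof (rule prod_ratio[OF finV vbl_sub[OF c]])
    fix u assume u: "u \<in> vbl c"
    then have uV: "u \<in> V" using vbl_sub[OF c] by auto
    show "real (card (if u \<in> vbl c then {p \<in> D2 v u. sel b p = forb c u} else D2 v u)) \<le> r u * real (card (D2 v u))"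
      using sel_card[OF uV, of v b "forb c u"] u unfolding r_def by simp
    show "0 \<le> r u" unfolding r_def by simp
  qed auto
  also have "(\<Prod>u\<in>vbl c. r u) \<le> (\<Prod>u\<in>vbl c. 1 / real (LL u))"
  proof (intro prod_mono conjI)
    fix u assume u: "u \<in> vbl c"
    then have uV: "u \<in> V" using vbl_sub[OF c] by auto
    show "0 \<le> r u" unfolding r_def by simp
    have "real (LL u) \<le> real (card (if b then DX v u else DY v u))"
      using DX_card[OF uV] DY_card[OF uV] by auto
    then show "r u \<le> 1 / real (LL u)" unfolding r_def using LL_pos[OF uV]
      by (intro divide_left_mono) auto
  qed
  also have "\<dots> = 1 / (\<Prod>u\<in>vbl c. real (LL u))" by (simp add: prod_dividef)
  also have "\<dots> \<le> 1 / K0" using main_facts[OF c] by (intro divide_left_mono) auto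
  finally show ?thesis unfolding pp_def by (simp add: mult_right_mono)
qed

lemma lll: "lll_setting V (D2 v) TT (\<lambda>t. vbl (fst t)) (AT v) pp (2*k*d)"
proof
  show "finite V" by (rule finV)
  show "finite (D2 v w)" for w by (rule D2_fin)
  show "finite TT" unfolding TT_def using finC by simp
  show "vbl (fst t) \<subseteq> V" if "t \<in> TT" for t using that vbl_sub unfolding TT_def by (cases t) auto
  show "AT v t \<subseteq> PiE V (D2 v)" if "t \<in> TT" for t unfolding AT_def by auto
  show "dep_on (PiE V (D2 v)) (vbl (fst t)) (AT v t)" if "t \<in> TT" for t
    unfolding dep_on_def AT_def by auto
  show "real (card (AT v t)) \<le> pp * card (PiE V (D2 v))" if "t \<in> TT" for t
    using that AT_card unfolding TT_def by (cases t) auto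
  show "0 \<le> pp" "pp \<le> 1/4" using pp_bounds by auto
  show "card {s\<in>TT. s \<noteq> t \<and> vbl (fst s) \<inter> vbl (fst t) \<noteq> {}} \<le> 2*k*d" if t: "t \<in> TT" for t
  proof -
    obtain c b where tc: "t = (c, b)" and c: "c \<in> C" using t unfolding TT_def by auto
    have "{s\<in>TT. s \<noteq> t \<and> vbl (fst s) \<inter> vbl (fst t) \<noteq> {}} \<subseteq> {c'\<in>C. vbl c' \<inter> vbl c \<noteq> {}} \<times> UNIV"
      unfolding TT_def tc by auto
    then have "card {s\<in>TT. s \<noteq> t \<and> vbl (fst s) \<inter> vbl (fst t) \<noteq> {}} \<le> card ({c'\<in>C. vbl c' \<inter> vbl c \<noteq> {}} \<times> (UNIV::bool set))"
      using finC by (intro card_mono) auto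
    also have "\<dots> = 2 * card {c'\<in>C. vbl c' \<inter> vbl c \<noteq> {}}" by (simp add: card_cartesian_product)
    also have "\<dots> \<le> 2*k*d" using N_card[OF c] by simp
    finally show ?thesis .
  qed
  show "1/2 \<le> (1 - 2*pp)^(2*k*d)"
  proof -
    have "1 + real (2*k*d) * (- 2*pp) \<le> (1 + (- 2*pp))^(2*k*d)"
      by (rule Bernoulli_inequality) (use pp_bounds in auto)
    moreover have "1/2 \<le> 1 + real (2*k*d) * (- 2*pp)" using pp_bounds(3) by (simp add: algebra_simps)
    ultimately show ?thesis by simp
  qed
qed

end

context csp_setting begin
lemma Gv_eq: "Gv v = lll_setting.GG V (D2 v) (AT v) TT"
  by (simp add: Gv_def lll_setting.GG_def[OF lll])

lemma Gv_iff: "z \<in> Gv v \<longleftrightarrow> z \<in> PiE V (D2 v) \<and>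
   (\<forall>c\<in>C. (\<exists>w\<in>vbl c. fst (z w) \<noteq> forb c w) \<and> (\<exists>w\<in>vbl c. snd (z w) \<noteq> forb c w))"
proof -
  have a: "z \<in> Gv v \<longleftrightarrow> z \<in> PiE V (D2 v) \<and> (\<forall>c\<in>C. \<forall>b. z \<notin> AT v (c, b))"
    unfolding Gv_def TT_def by auto
  have b: "z \<in> PiE V (D2 v) \<Longrightarrow> z \<notin> AT v (c, b) \<longleftrightarrow> (\<exists>w\<in>vbl c. sel b (z w) \<noteq> forb c w)" for c b
    unfolding AT_def by auto
  show ?thesis
  proof (cases "z \<in> PiE V (D2 v)")
    case False then show ?thesis using a by auto
  next
    case True
    then have "(\<forall>c\<in>C. \<forall>b. z \<notin> AT v (c, b)) \<longleftrightarrow>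
      (\<forall>c\<in>C. (\<exists>w\<in>vbl c. fst (z w) \<noteq> forb c w) \<and> (\<exists>w\<in>vbl c. snd (z w) \<noteq> forb c w))"
      using b[OF True] by (simp add: all_bool_eq sel_def)
    then show ?thesis using a True by simp
  qed
qed

lemma SX_iff: "x \<in> SX v \<longleftrightarrow> x \<in> PiE V (DX v) \<and> (\<forall>c\<in>C. \<exists>w\<in>vbl c. x w \<noteq> forb c w)"
  unfolding SX_def sat_assign_def DX_def by (auto simp: PiE_iff)
lemma SY_iff: "x \<in> SY v \<longleftrightarrow> x \<in> PiE V (DY v) \<and> (\<forall>c\<in>C. \<exists>w\<in>vbl c. x w \<noteq> forb c w)"
  unfolding SY_def sat_assign_def DY_def by (auto simp: PiE_iff)

definition zipp :: "('v \<Rightarrow> nat) \<times> ('v \<Rightarrow> nat) \<Rightarrow> 'v \<Rightarrow> nat \<times> nat" where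
  "zipp xy = (\<lambda>u. if u \<in> V then (fst xy u, snd xy u) else undefined)"

lemma card_zip:
  assumes v: "v \<in> V"
  shows "card {z \<in> Gv v. P (fst (z v)) \<and> Q (snd (z v))} = card {x \<in> SX v. P (x v)} * card {y \<in> SY v. Q (y v)}"
proof -
  have inj: "inj_on zipp ({x \<in> SX v. P (x v)} \<times> {y \<in> SY v. Q (y v)})"
  proof (rule inj_onI)
    fix a b assume a: "a \<in> {x \<in> SX v. P (x v)} \<times> {y \<in> SY v. Q (y v)}"
      and b: "b \<in> {x \<in> SX v. P (x v)} \<times> {y \<in> SY v. Q (y v)}" and e: "zipp a = zipp b"
    have "fst a = fst b"
    proof
      fix u show "fst a u = fst b u"
      proof (cases "u \<in> V")
        case True then show ?thesis using fun_cong[OF e, of u] unfolding zipp_def by auto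
      next
        case False then show ?thesis using a b unfolding SX_iff by (auto simp: PiE_iff extensional_def)
      qed
    qed
    moreover have "snd a = snd b"
    proof
      fix u show "snd a u = snd b u"
      proof (cases "u \<in> V")
        case True then show ?thesis using fun_cong[OF e, of u] unfolding zipp_def by auto
      next
        case False then show ?thesis using a b unfolding SY_iff by (auto simp: PiE_iff extensional_def)
      qed
    qed
    ultimately show "a = b" by (simp add: prod_eq_iff)
  qed
  have img: "zipp ` ({x \<in> SX v. P (x v)} \<times> {y \<in> SY v. Q (y v)}) = {z \<in> Gv v. P (fst (z v)) \<and> Q (snd (z v))}"
  proof
    show "zipp ` ({x \<in> SX v. P (x v)} \<times> {y \<in> SY v. Q (y v)}) \<subseteq> {z \<in> Gv v. P (fst (z v)) \<and> Q (snd (z v))}"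
    proof
      fix z assume "z \<in> zipp ` ({x \<in> SX v. P (x v)} \<times> {y \<in> SY v. Q (y v)})"
      then obtain x y where x: "x \<in> SX v" "P (x v)" and y: "y \<in> SY v" "Q (y v)" and z: "z = zipp (x, y)" by auto
      have "z \<in> PiE V (D2 v)" using x y unfolding z zipp_def SX_iff SY_iff D2_def by (auto simp: PiE_iff extensional_def)
      moreover have "\<forall>c\<in>C. (\<exists>w\<in>vbl c. fst (z w) \<noteq> forb c w) \<and> (\<exists>w\<in>vbl c. snd (z w) \<noteq> forb c w)"
      proof
        fix c assume c: "c \<in> C"
        obtain w1 where "w1 \<in> vbl c" "x w1 \<noteq> forb c w1" using x c unfolding SX_iff by auto
        moreover obtain w2 where "w2 \<in> vbl c" "y w2 \<noteq> forb c w2" using y c unfolding SY_iff by auto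
        ultimately show "(\<exists>w\<in>vbl c. fst (z w) \<noteq> forb c w) \<and> (\<exists>w\<in>vbl c. snd (z w) \<noteq> forb c w)"
          using vbl_sub[OF c] unfolding z zipp_def by auto
      qed
      ultimately show "z \<in> {z \<in> Gv v. P (fst (z v)) \<and> Q (snd (z v))}"
        using x y v unfolding Gv_iff z zipp_def by auto
    qed
  next
    show "{z \<in> Gv v. P (fst (z v)) \<and> Q (snd (z v))} \<subseteq> zipp ` ({x \<in> SX v. P (x v)} \<times> {y \<in> SY v. Q (y v)})"
    proof
      fix z assume z: "z \<in> {z \<in> Gv v. P (fst (z v)) \<and> Q (snd (z v))}"
      define x where "x = (\<lambda>u. if u \<in> V then fst (z u) else undefined)"
      define y where "y = (\<lambda>u. if u \<in> V then snd (z u) else undefined)"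
      have zP: "z \<in> PiE V (D2 v)" using z Gv_iff by auto
      have "x \<in> SX v"
        unfolding SX_iff
      proof
        show "x \<in> PiE V (DX v)" using zP unfolding x_def D2_def by (auto simp: PiE_iff extensional_def)
        show "\<forall>c\<in>C. \<exists>w\<in>vbl c. x w \<noteq> forb c w"
        proof
          fix c assume c: "c \<in> C"
          obtain w where w: "w \<in> vbl c" "fst (z w) \<noteq> forb c w" using z c unfolding Gv_iff by blast
          then have "w \<in> V" using vbl_sub[OF c] by auto
          then show "\<exists>w\<in>vbl c. x w \<noteq> forb c w" using w unfolding x_def by auto
        qed
      qed
      moreover have "y \<in> SY v"
        unfolding SY_iff
      proof
        show "y \<in> PiE V (DY v)" using zP unfolding y_def D2_def by (auto simp: PiE_iff extensional_def)
        show "\<forall>c\<in>C. \<exists>w\<in>vbl c. y w \<noteq> forb c w"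
        proof
          fix c assume c: "c \<in> C"
          obtain w where w: "w \<in> vbl c" "snd (z w) \<noteq> forb c w" using z c unfolding Gv_iff by blast
          then have "w \<in> V" using vbl_sub[OF c] by auto
          then show "\<exists>w\<in>vbl c. y w \<noteq> forb c w" using w unfolding y_def by auto
        qed
      qed
      moreover have "zipp (x, y) = z"
      proof
        fix u show "zipp (x, y) u = z u"
          using zP unfolding zipp_def x_def y_def by (cases "u \<in> V") (auto simp: PiE_iff extensional_def)
      qed
      ultimately show "z \<in> zipp ` ({x \<in> SX v. P (x v)} \<times> {y \<in> SY v. Q (y v)})"
      proof -
        have "x \<in> {x \<in> SX v. P (x v)}" using \<open>x \<in> SX v\<close> z v unfolding x_def by auto
        moreover have "y \<in> {y \<in> SY v. Q (y v)}" using \<open>y \<in> SY v\<close> z v unfolding y_def by auto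
        ultimately show ?thesis using \<open>zipp (x, y) = z\<close> by (simp add: image_iff) blast
      qed
    qed
  qed
  have "card {z \<in> Gv v. P (fst (z v)) \<and> Q (snd (z v))} = card ({x \<in> SX v. P (x v)} \<times> {y \<in> SY v. Q (y v)})"
    using card_image[OF inj] img by simp
  then show ?thesis by (simp add: card_cartesian_product)
qed

lemma nu_eq: "nu_cond V q C vbl forb h v X a = real (card {x \<in> SX v. h v (x v) = a}) / real (card (SX v))"
  unfolding nu_cond_def SX_def Let_def by (rule refl)
lemma nu_eqY: "nu_cond V q C vbl forb h v Y a = real (card {x \<in> SY v. h v (x v) = a}) / real (card (SY v))"
  unfolding nu_cond_def SY_def Let_def by (rule refl)

end

lemma swap_count:
  fixes G B :: "'z set" and \<tau> :: "'z \<Rightarrow> 'z" and f1 f2 :: "'z \<Rightarrow> 'y"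
  assumes finG: "finite G" and BG: "B \<subseteq> G"
    and tG: "\<And>z. z \<in> G \<Longrightarrow> \<tau> z \<in> G" and tt: "\<And>z. z \<in> G \<Longrightarrow> \<tau> (\<tau> z) = z"
    and tB: "\<And>z. z \<in> G \<Longrightarrow> \<tau> z \<in> B \<longleftrightarrow> z \<in> B"
    and tf: "\<And>z. z \<in> G - B \<Longrightarrow> f1 (\<tau> z) = f2 z"
  shows "\<bar>real (card {z\<in>G. f1 z = a}) - real (card {z\<in>G. f2 z = a})\<bar>
          \<le> real (card {z\<in>B. f1 z = a}) + real (card {z\<in>B. f2 z = a})"
proof -
  have tGB: "\<tau> z \<in> G - B" if "z \<in> G - B" for z using that tG tB by auto
  have tf2: "f2 (\<tau> z) = f1 z" if z: "z \<in> G - B" for z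
    using tf[OF tGB[OF z]] tt z by auto
  have finGB: "finite {z\<in>G-B. P z}" for P using finG by auto
  have inj: "inj_on \<tau> (G - B)" by (rule inj_onI) (metis DiffD1 tt)
  have le1: "card {z\<in>G-B. f2 z = a} \<le> card {z\<in>G-B. f1 z = a}"
    by (rule card_inj_on_le[of \<tau>]) (use inj tGB tf finGB in \<open>auto intro: inj_on_subset\<close>)
  have le2: "card {z\<in>G-B. f1 z = a} \<le> card {z\<in>G-B. f2 z = a}"
    by (rule card_inj_on_le[of \<tau>]) (use inj tGB tf2 finGB in \<open>auto intro: inj_on_subset\<close>)
  have eq: "card {z\<in>G-B. f1 z = a} = card {z\<in>G-B. f2 z = a}" using le1 le2 by simp
  have split: "card {z\<in>G. f z = a} = card {z\<in>B. f z = a} + card {z\<in>G-B. f z = a}" for f :: "'z \<Rightarrow> 'y"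
  proof -
    have "{z\<in>G. f z = a} = {z\<in>B. f z = a} \<union> {z\<in>G-B. f z = a}" using BG by auto
    moreover have "{z\<in>B. f z = a} \<inter> {z\<in>G-B. f z = a} = {}" by auto
    moreover have "finite B" using BG finG by (rule finite_subset)
    then have "finite {z\<in>B. f z = a}" by simp
    ultimately show ?thesis using finGB by (simp add: card_Un_disjoint)
  qed
  show ?thesis using split[of f1] split[of f2] eq by simp
qed

lemma sum_card_fibers:
  fixes B :: "'z set" and f :: "'z \<Rightarrow> 'y"
  assumes "finite B" "finite S"
  shows "(\<Sum>a\<in>S. card {z\<in>B. f z = a}) \<le> card B"
proof -
  have "(\<Sum>a\<in>S. card {z\<in>B. f z = a}) = card (\<Union>a\<in>S. {z\<in>B. f z = a})"
    by (rule card_UN_disjoint[symmetric]) (use assms in auto)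
  also have "\<dots> \<le> card B" by (rule card_mono) (use assms in auto)
  finally show ?thesis .
qed

context csp_setting begin

definition openz :: "('v \<Rightarrow> nat \<times> nat) \<Rightarrow> 'c \<Rightarrow> bool" where
  "openz z c \<longleftrightarrow> (\<forall>w\<in>vbl c. fst (z w) = forb c w \<or> snd (z w) = forb c w)"

definition UU :: "('v \<Rightarrow> nat \<times> nat) \<Rightarrow> 'v set" where
  "UU z = insert v0 {u. \<exists>rs\<in>chains vbl C v0. (\<forall>c\<in>set rs. openz z c) \<and> u \<in> vbl (hd rs)}"

definition tau :: "('v \<Rightarrow> nat \<times> nat) \<Rightarrow> 'v \<Rightarrow> nat \<times> nat" where
  "tau z = (\<lambda>u. if u \<in> V - UU z then prod.swap (z u) else z u)"

lemma openz_tau: "openz (tau z) c = openz z c"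
proof -
  have "(fst (tau z w) = f \<or> snd (tau z w) = f) \<longleftrightarrow> (fst (z w) = f \<or> snd (z w) = f)" for w f
    unfolding tau_def by (cases "z w") auto
  then show ?thesis unfolding openz_def by simp
qed

lemma UU_tau: "UU (tau z) = UU z"
  unfolding UU_def openz_tau ..

lemma tau_tau: "tau (tau z) = z"
proof
  fix u show "tau (tau z) u = z u" unfolding tau_def UU_tau[unfolded tau_def] by (cases "z u") auto
qed

lemma UU_sub: "UU z \<subseteq> V"
proof
  fix u assume "u \<in> UU z"
  then consider "u = v0" | rs where "rs \<in> chains vbl C v0" "u \<in> vbl (hd rs)" unfolding UU_def by auto
  then show "u \<in> V"
  proof cases
    case 1 then show ?thesis using v0 by simp
  next
    case 2
    then have "hd rs \<in> C" unfolding chains_def by (auto intro: hd_in_set)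
    then show ?thesis using 2 vbl_sub by auto
  qed
qed

lemma v0_UU: "v0 \<in> UU z" unfolding UU_def by simp

lemma closure:
  assumes c: "c \<in> C" and o: "openz z c" and ne: "vbl c \<inter> UU z \<noteq> {}"
  shows "vbl c \<subseteq> UU z"
proof -
  obtain w where w: "w \<in> vbl c" "w \<in> UU z" using ne by auto
  have "\<exists>rs\<in>chains vbl C v0. (\<forall>c'\<in>set rs. openz z c') \<and> hd rs = c"
  proof (cases "w = v0")
    case True
    have "[c] \<in> chains vbl C v0" using c w True unfolding chains_def by auto
    then show ?thesis using o by force
  next
    case False
    then obtain rs where rs: "rs \<in> chains vbl C v0" "\<forall>c'\<in>set rs. openz z c'" "w \<in> vbl (hd rs)"
      using w unfolding UU_def by auto
    then obtain r rs' where rr: "rs = r # rs'" unfolding chains_def by (cases rs) auto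
    have "cpath vbl (c # rs)" using rs w unfolding rr chains_def by auto
    then have "c # rs \<in> chains vbl C v0" using rs c unfolding chains_def rr by auto
    then show ?thesis by (intro bexI[of _ "c # rs"]) (use rs o in auto)
  qed
  then show ?thesis unfolding UU_def by auto
qed

lemma tau_G: assumes v: "v \<in> V" and z: "z \<in> Gv v" shows "tau z \<in> Gv v"
  unfolding Gv_iff
proof
  have zP: "z \<in> PiE V (D2 v)" and zc: "\<forall>c\<in>C. (\<exists>w\<in>vbl c. fst (z w) \<noteq> forb c w) \<and> (\<exists>w\<in>vbl c. snd (z w) \<noteq> forb c w)"
    using z Gv_iff by auto
  show "tau z \<in> PiE V (D2 v)"
  proof -
    have "tau z u \<in> D2 v u" if u: "u \<in> V" for u
    proof (cases "u \<in> UU z")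
      case True then show ?thesis using zP u unfolding tau_def by (auto simp: PiE_iff)
    next
      case False
      then have "u \<noteq> v0" using v0_UU by auto
      then have "DX v u = DY v u" using DXY_eq u by auto
      then show ?thesis using zP u False unfolding tau_def D2_def by (auto simp: PiE_iff)
    qed
    moreover have "tau z u = undefined" if "u \<notin> V" for u
      using zP that unfolding tau_def by (auto simp: PiE_iff extensional_def)
    ultimately show ?thesis by (auto simp: PiE_iff extensional_def)
  qed
  show "\<forall>c\<in>C. (\<exists>w\<in>vbl c. fst (tau z w) \<noteq> forb c w) \<and> (\<exists>w\<in>vbl c. snd (tau z w) \<noteq> forb c w)"
  proof
    fix c assume c: "c \<in> C"
    show "(\<exists>w\<in>vbl c. fst (tau z w) \<noteq> forb c w) \<and> (\<exists>w\<in>vbl c. snd (tau z w) \<noteq> forb c w)"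
    proof (cases "openz z c")
      case False
      then obtain w where w: "w \<in> vbl c" "fst (z w) \<noteq> forb c w" "snd (z w) \<noteq> forb c w"
        unfolding openz_def by auto
      have "fst (tau z w) \<noteq> forb c w \<and> snd (tau z w) \<noteq> forb c w"
        using w unfolding tau_def by (cases "z w") auto
      then show ?thesis using w(1) by blast
    next
      case True
      show ?thesis
      proof (cases "vbl c \<inter> UU z = {}")
        case False
        then have "vbl c \<subseteq> UU z" using closure[OF c True] by simp
        then have "\<forall>w\<in>vbl c. tau z w = z w" unfolding tau_def by auto
        then show ?thesis using zc c by auto
      next
        case True
        then have "\<forall>w\<in>vbl c. tau z w = prod.swap (z w)" using vbl_sub[OF c] unfolding tau_def by auto
        then show ?thesis using zc c by auto
      qed
    qed
  qed
qed

lemma tau_fst: "v \<in> V \<Longrightarrow> v \<notin> UU z \<Longrightarrow> fst (tau z v) = snd (z v)"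
  unfolding tau_def by simp

lemma Gv_fin: "finite (Gv v)"
  using lll_setting.GG_fin[OF lll] Gv_eq by simp

lemma PiE_D2_pos: "v \<in> V \<Longrightarrow> 0 < card (PiE V (D2 v))"
proof -
  assume v: "v \<in> V"
  have "card (PiE V (D2 v)) = (\<Prod>u\<in>V. card (D2 v u))" using finV by (simp add: card_PiE)
  moreover have "0 < (\<Prod>u\<in>V. card (D2 v u))"
    using DX_cpos DY_cpos unfolding D2_def by (auto simp: card_cartesian_product prod_pos)
  ultimately show ?thesis by simp
qed

lemma Gv_pos: assumes v: "v \<in> V" shows "0 < card (Gv v)"
proof -
  have "(1-2*pp)^card TT * card (PiE V (D2 v)) \<le> card (Gv v)"
    using lll_setting.nonempty_bound[OF lll] Gv_eq by simp
  moreover have "0 < (1-2*pp)^card TT" using pp_bounds by simp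
  moreover have "0 < real (card (PiE V (D2 v)))" using PiE_D2_pos[OF v] by simp
  ultimately have "0 < real (card (Gv v))" by (smt (verit) mult_pos_pos)
  then show ?thesis by simp
qed

lemma dTV_le: assumes v: "v \<in> V" and vv0: "v \<noteq> v0"
  shows "dTV_cond V q C vbl forb h \<Sigma> v X Y \<le> real (card {z\<in>Gv v. v \<in> UU z}) / real (card (Gv v))"
proof -
  define G where "G = Gv v"
  define B where "B = {z\<in>Gv v. v \<in> UU z}"
  define N where "N = real (card G)"
  have Npos: "0 < N" using Gv_pos[OF v] unfolding N_def G_def by simp
  have cG: "card G = card (SX v) * card (SY v)" using card_zip[OF v, of "\<lambda>_. True" "\<lambda>_. True"] unfolding G_def by simp
  have "0 < card G" using Gv_pos[OF v] unfolding G_def .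
  then have "0 < card (SX v) * card (SY v)" using cG by simp
  then have SXp: "0 < card (SX v)" and SYp: "0 < card (SY v)" by auto
  have nuX: "nu_cond V q C vbl forb h v X a = real (card {z\<in>G. h v (fst (z v)) = a}) / N" for a
  proof -
    have "card {z\<in>G. h v (fst (z v)) = a} = card {x \<in> SX v. h v (x v) = a} * card (SY v)"
      using card_zip[OF v, of "\<lambda>x. h v x = a" "\<lambda>_. True"] unfolding G_def by simp
    then show ?thesis unfolding nu_eq N_def cG using SYp by (simp add: field_simps)
  qed
  have nuY: "nu_cond V q C vbl forb h v Y a = real (card {z\<in>G. h v (snd (z v)) = a}) / N" for a
  proof -
    have "card {z\<in>G. h v (snd (z v)) = a} = card (SX v) * card {y \<in> SY v. h v (y v) = a}"
      using card_zip[OF v, of "\<lambda>_. True" "\<lambda>y. h v y = a"] unfolding G_def by simp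
    then show ?thesis unfolding nu_eqY N_def cG using SXp by (simp add: field_simps)
  qed
  have sw: "\<bar>real (card {z\<in>G. h v (fst (z v)) = a}) - real (card {z\<in>G. h v (snd (z v)) = a})\<bar>
          \<le> real (card {z\<in>B. h v (fst (z v)) = a}) + real (card {z\<in>B. h v (snd (z v)) = a})" for a
  proof (rule swap_count[where \<tau> = tau])
    show "finite G" unfolding G_def by (rule Gv_fin)
    show "B \<subseteq> G" unfolding B_def G_def by auto
    show "tau z \<in> G" if "z \<in> G" for z using tau_G[OF v] that unfolding G_def by auto
    show "tau (tau z) = z" for z by (rule tau_tau)
    show "tau z \<in> B \<longleftrightarrow> z \<in> B" if "z \<in> G" for z
      using that tau_G[OF v] UU_tau unfolding B_def G_def by auto
    show "h v (fst (tau z v)) = h v (snd (z v))" if "z \<in> G - B" for z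
      using that tau_fst[OF v] unfolding B_def G_def by auto
  qed
  have finB: "finite B" unfolding B_def using Gv_fin by auto
  have finS: "finite (\<Sigma> v)" using Sigma_fin[OF v] .
  have "dTV_cond V q C vbl forb h \<Sigma> v X Y
      = 1/2 * (\<Sum>a\<in>\<Sigma> v. \<bar>real (card {z\<in>G. h v (fst (z v)) = a}) - real (card {z\<in>G. h v (snd (z v)) = a})\<bar> / N)"
    unfolding dTV_cond_def nuX nuY using Npos by (simp add: diff_divide_distrib[symmetric])
  also have "\<dots> \<le> 1/2 * (\<Sum>a\<in>\<Sigma> v. (real (card {z\<in>B. h v (fst (z v)) = a}) + real (card {z\<in>B. h v (snd (z v)) = a})) / N)"
    using sw Npos by (intro mult_left_mono sum_mono divide_right_mono) auto
  also have "\<dots> = 1/2 * ((real (\<Sum>a\<in>\<Sigma> v. card {z\<in>B. h v (fst (z v)) = a}) + real (\<Sum>a\<in>\<Sigma> v. card {z\<in>B. h v (snd (z v)) = a})) / N)"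
    by (simp add: sum_divide_distrib[symmetric] sum.distrib)
  also have "\<dots> \<le> 1/2 * ((real (card B) + real (card B)) / N)"
    using sum_card_fibers[OF finB finS, of "\<lambda>z. h v (fst (z v))"] sum_card_fibers[OF finB finS, of "\<lambda>z. h v (snd (z v))"] Npos
    by (intro mult_left_mono divide_right_mono add_mono) (auto simp flip: of_nat_sum)
  also have "\<dots> = real (card B) / N" by simp
  finally show ?thesis unfolding B_def N_def G_def .
qed

end

lemma cube_ineq: "1 \<le> (m::nat) \<Longrightarrow> (2*m - 1)^3 \<le> m^5"
proof -
  assume m: "1 \<le> m"
  consider "m = 1" | "m = 2" | "3 \<le> m" using m by linarith
  then show ?thesis
  proof cases
    case 3
    have "(2*m - 1)^3 \<le> (2*m)^3" by (intro power_mono) auto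
    also have "\<dots> = 8 * m^3" by (simp add: power_mult_distrib)
    also have "\<dots> \<le> m^2 * m^3"
    proof -
      have "9 \<le> m^2" using 3 power_mono[of 3 m 2] by simp
      then show ?thesis by (intro mult_right_mono) auto
    qed
    also have "\<dots> = m^5" by (simp flip: power_add)
    finally show ?thesis .
  qed auto
qed

lemma ratio_cube:
  fixes D :: "nat set"
  assumes fin: "finite D" and m: "1 \<le> card D"
  shows "(real (card {p \<in> D \<times> D. fst p = f \<or> snd p = f}) / real (card (D \<times> D)))^3 \<le> 1 / real (card D)"
proof -
  define m where "m = card D"
  have cB: "card {p \<in> D \<times> D. fst p = f \<or> snd p = f} \<le> 2*m - 1"
  proof (cases "f \<in> D")
    case True
    have "{p \<in> D \<times> D. fst p = f \<or> snd p = f} \<subseteq> ({f} \<times> D) \<union> ((D - {f}) \<times> {f})" by auto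
    then have "card {p \<in> D \<times> D. fst p = f \<or> snd p = f} \<le> card (({f} \<times> D) \<union> ((D - {f}) \<times> {f}))"
      using fin by (intro card_mono) auto
    also have "\<dots> \<le> card ({f} \<times> D) + card ((D - {f}) \<times> {f})" by (rule card_Un_le)
    also have "\<dots> = m + (m - 1)" using True fin unfolding m_def by (simp add: card_cartesian_product)
    finally show ?thesis using m m_def by linarith
  next
    case False
    then have "{p \<in> D \<times> D. fst p = f \<or> snd p = f} = {}" by auto
    then have "card {p \<in> D \<times> D. fst p = f \<or> snd p = f} = 0" by (simp only: card.empty)
    then show ?thesis by simp
  qed
  have mp: "0 < real m" using m m_def by simp
  have "(real (card {p \<in> D \<times> D. fst p = f \<or> snd p = f}))^3 \<le> real ((2*m - 1)^3)"
    using cB by (simp flip: of_nat_power) 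
  also have "\<dots> \<le> real (m^5)" by (rule of_nat_mono[OF cube_ineq]) (use m m_def in simp)
  finally have c3: "(real (card {p \<in> D \<times> D. fst p = f \<or> snd p = f}))^3 \<le> real m ^ 5" by simp
  have "(real (card {p \<in> D \<times> D. fst p = f \<or> snd p = f}) / real (card (D \<times> D)))^3
        = (real (card {p \<in> D \<times> D. fst p = f \<or> snd p = f}))^3 / real m ^ 6"
  proof -
    have "real (card (D \<times> D)) ^ 3 = real m ^ 6"
      by (simp add: card_cartesian_product m_def power_mult_distrib flip: power_add)
    then show ?thesis by (simp add: power_divide)
  qed
  also have "\<dots> \<le> real m ^ 5 / real m ^ 6" using c3 mp by (intro divide_right_mono) auto
  also have "\<dots> = 1 / real m" using mp by (simp add: field_simps power_Suc[symmetric] del: power_Suc)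
  finally show ?thesis unfolding m_def .
qed

context csp_setting begin

definition rho :: real where "rho = 1 / (18 * real (k*d)^2)"

lemma rho_cube: assumes c: "c \<in> C" shows "real q / K0 \<le> rho^3" and "0 < rho"
proof -
  note mf = main_facts[OF c]
  have kd1: "1 * 1 \<le> k * d" using mf by (intro mult_le_mono) auto
  have "real 1 \<le> real (k*d)" using kd1 by (intro of_nat_mono) simp
  then have t: "1 \<le> real (k*d)" by simp
  have "real q / K0 = 1 / (3000 * real q * real (k*d)^6)"
    unfolding K0_def using mf by (simp add: field_simps power_mult_distrib power2_eq_square)
  also have "\<dots> \<le> 1 / (5832 * real (k*d)^6)"
    using mf t by (intro divide_left_mono mult_right_mono) auto
  also have "\<dots> = rho^3" unfolding rho_def by (simp add: power_divide power_mult_distrib flip: power_mult)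
  finally show "real q / K0 \<le> rho^3" .
  have "0 < real (k*d)" using t by linarith
  then show "0 < rho" unfolding rho_def by (intro divide_pos_pos mult_pos_pos zero_less_power) auto
qed

lemma openz_PiE: assumes c: "c \<in> C"
  shows "{z \<in> PiE V (D2 v). openz z c} = PiE V (\<lambda>u. if u \<in> vbl c then {p \<in> D2 v u. fst p = forb c u \<or> snd p = forb c u} else D2 v u)"
proof (intro set_eqI iffI)
  fix z assume "z \<in> {z \<in> PiE V (D2 v). openz z c}"
  then have z: "z \<in> PiE V (D2 v)" "openz z c" by auto
  then show "z \<in> PiE V (\<lambda>u. if u \<in> vbl c then {p \<in> D2 v u. fst p = forb c u \<or> snd p = forb c u} else D2 v u)"
    unfolding openz_def by (auto simp: PiE_iff)
next
  fix z assume "z \<in> PiE V (\<lambda>u. if u \<in> vbl c then {p \<in> D2 v u. fst p = forb c u \<or> snd p = forb c u} else D2 v u)"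
  then have z: "\<And>u. u \<in> V \<Longrightarrow> z u \<in> (if u \<in> vbl c then {p \<in> D2 v u. fst p = forb c u \<or> snd p = forb c u} else D2 v u)"
    and e: "z \<in> extensional V" by (auto simp: PiE_iff)
  have "z \<in> PiE V (D2 v)"
  proof -
    have "z u \<in> D2 v u" if "u \<in> V" for u using z[OF that] by (auto split: if_splits)
    then show ?thesis using e by (auto simp: PiE_iff)
  qed
  moreover have "fst (z w) = forb c w \<or> snd (z w) = forb c w" if "w \<in> vbl c" for w
    using z[of w] that vbl_sub[OF c] by auto
  ultimately show "z \<in> {z \<in> PiE V (D2 v). openz z c}" unfolding openz_def by auto
qed

lemma one_open: assumes c: "c \<in> C" and v: "v \<in> V"
  shows "real (card {z \<in> PiE V (D2 v). openz z c}) \<le> rho * card (PiE V (D2 v))"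
proof -
  define B where "B = (\<lambda>u. {p \<in> D2 v u. fst p = forb c u \<or> snd p = forb c u})"
  define r where "r = (\<lambda>u. real (card (B u)) / real (card (D2 v u)))"
  have D2p: "u \<in> V \<Longrightarrow> 0 < card (D2 v u)" for u
    using DX_cpos DY_cpos unfolding D2_def by (simp add: card_cartesian_product)
  have r0: "0 \<le> r u" for u unfolding r_def by simp
  have "real (card {z \<in> PiE V (D2 v). openz z c}) \<le> (\<Prod>u\<in>vbl c. r u) * card (PiE V (D2 v))"
    unfolding openz_PiE[OF c]
  proof (rule prod_ratio[OF finV vbl_sub[OF c]])
    fix u assume u: "u \<in> vbl c"
    then have uV: "u \<in> V" using vbl_sub[OF c] by auto
    show "real (card (if u \<in> vbl c then {p \<in> D2 v u. fst p = forb c u \<or> snd p = forb c u} else D2 v u)) \<le> r u * real (card (D2 v u))"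
      using u D2p[OF uV] unfolding r_def B_def by simp
    show "0 \<le> r u" by (rule r0)
  qed auto
  also have "(\<Prod>u\<in>vbl c. r u) \<le> rho"
  proof -
    have r3: "(r u)^3 \<le> (if u = v0 then real q else 1) / real (LL u)" if u: "u \<in> vbl c" for u
    proof -
      have uV: "u \<in> V" using u vbl_sub[OF c] by auto
      have LLp: "0 < real (LL u)" using LL_pos[OF uV] by simp
      show ?thesis
      proof (cases "u = v0")
        case True
        have "B u \<subseteq> D2 v u" unfolding B_def by auto
        then have "card (B u) \<le> card (D2 v u)" using D2_fin by (intro card_mono) auto
        then have "r u \<le> 1" unfolding r_def using D2p[OF uV] by simp
        then have "(r u)^3 \<le> 1" using r0 by (simp add: power_le_one)
        also have "1 \<le> real q / real (LL u)" using LL_le[OF uV] LLp by simp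
        finally show ?thesis using True by simp
      next
        case False
        have eq: "DX v u = DY v u" using DXY_eq[OF uV False] .
        have m1: "1 \<le> card (DX v u)" using DX_cpos[OF uV, of v] by (simp add: Suc_le_eq)
        have "(r u)^3 \<le> 1 / real (card (DX v u))"
          using ratio_cube[OF DX_fin m1, of "forb c u"] unfolding r_def B_def D2_def eq by simp
        also have "\<dots> \<le> 1 / real (LL u)" using DX_card[OF uV, of v] LLp DX_cpos[OF uV, of v] by (intro divide_left_mono) auto
        finally show ?thesis using False by simp
      qed
    qed
    have finvc: "finite (vbl c)" using vbl_sub[OF c] finV finite_subset by blast
    have "(\<Prod>u\<in>vbl c. r u)^3 = (\<Prod>u\<in>vbl c. (r u)^3)" by (simp add: prod_power_distrib)
    also have "\<dots> \<le> (\<Prod>u\<in>vbl c. (if u = v0 then real q else 1) / real (LL u))"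
      using r3 r0 by (intro prod_mono) auto
    also have "\<dots> = (\<Prod>u\<in>vbl c. (if u = v0 then real q else 1)) / (\<Prod>u\<in>vbl c. real (LL u))"
      by (simp add: prod_dividef)
    also have "\<dots> \<le> real q / (\<Prod>u\<in>vbl c. real (LL u))"
    proof (intro divide_right_mono)
      show "(\<Prod>u\<in>vbl c. (if u = v0 then real q else 1)) \<le> real q"
        using finvc q_pos by (simp add: prod.delta)
      show "0 \<le> (\<Prod>u\<in>vbl c. real (LL u))" by (simp add: prod_nonneg)
    qed
    also have "\<dots> \<le> real q / K0" using main_facts[OF c] by (intro divide_left_mono) auto
    also have "\<dots> \<le> rho^3" by (rule rho_cube[OF c])
    finally have "(\<Prod>u\<in>vbl c. r u)^3 \<le> rho^3" .
    then have "(\<Prod>u\<in>vbl c. r u)^Suc 2 \<le> rho^Suc 2" by (simp add: numeral_3_eq_3)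
    then show ?thesis by (rule power_le_imp_le_base) (use rho_cube(2)[OF c] in simp)
  qed
  finally show ?thesis using PiE_D2_pos[OF v] by (simp add: mult_right_mono)
qed

end

lemma csep_distinct: assumes "csep vb rs" shows "distinct rs"
  unfolding distinct_conv_nth
proof (intro allI impI)
  fix i j assume i: "i < length rs" and j: "j < length rs" and ij: "i \<noteq> j"
  then consider "i < j" | "j < i" by linarith
  then show "rs ! i \<noteq> rs ! j"
  proof cases
    case 1 then show ?thesis using assms j unfolding csep_def by blast
  next
    case 2 then show ?thesis using assms i unfolding csep_def by metis
  qed
qed

context csp_setting begin

definition CH :: "'c list set" where "CH = {rs \<in> chains vbl C v0. csep vbl rs}"

lemma CH_len: "rs \<in> CH \<Longrightarrow> 1 \<le> length rs \<and> length rs \<le> card C"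
proof -
  assume rs: "rs \<in> CH"
  then have d: "distinct rs" and s: "set rs \<subseteq> C" and ne: "rs \<noteq> []"
    unfolding CH_def chains_def using csep_distinct by auto
  have "length rs = card (set rs)" using d by (simp add: distinct_card)
  also have "\<dots> \<le> card C" using s finC by (intro card_mono)
  finally show ?thesis using ne by (cases rs) auto
qed

lemma CH_fin: "finite CH"
proof -
  have "CH \<subseteq> {rs. set rs \<subseteq> C \<and> length rs \<le> card C}" using CH_len unfolding CH_def chains_def by auto
  then show ?thesis using finite_lists_length_le[OF finC] finite_subset by blast
qed

lemma multi_open:
  assumes v: "v \<in> V"
  shows "finite Os \<Longrightarrow> Os \<subseteq> C \<Longrightarrow> (\<forall>c\<in>Os. \<forall>c'\<in>Os. c \<noteq> c' \<longrightarrow> vbl c \<inter> vbl c' = {}) \<Longrightarrow>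
    real (card {z \<in> PiE V (D2 v). \<forall>c\<in>Os. openz z c}) \<le> rho^card Os * card (PiE V (D2 v))"
proof (induction Os rule: finite_induct)
  case empty
  then show ?case by simp
next
  case (insert c Os)
  define P where "P = PiE V (D2 v)"
  define E' where "E' = {z \<in> P. \<forall>c\<in>Os. openz z c}"
  define Oc where "Oc = {z \<in> P. openz z c}"
  have c: "c \<in> C" using insert by auto
  have IH: "real (card E') \<le> rho^card Os * card P"
    using insert unfolding E'_def P_def by auto
  have one: "real (card Oc) \<le> rho * card P" using one_open[OF c v] unfolding Oc_def P_def .
  have eq: "{z \<in> P. \<forall>c'\<in>insert c Os. openz z c'} = Oc \<inter> E'" unfolding Oc_def E'_def by auto
  have depOc: "dep_on P (vbl c) Oc" unfolding dep_on_def Oc_def openz_def by auto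
  have depE: "dep_on P (V - vbl c) E'"
    unfolding dep_on_def
  proof (intro ballI impI)
    fix z z' assume z: "z \<in> P" and z': "z' \<in> P" and ag: "\<forall>w\<in>V - vbl c. z w = z' w"
    have "\<forall>c'\<in>Os. \<forall>w\<in>vbl c'. z w = z' w"
    proof (intro ballI)
      fix c' w assume c': "c' \<in> Os" and w: "w \<in> vbl c'"
      have "c' \<noteq> c" using insert c' by auto
      then have "vbl c' \<inter> vbl c = {}" using insert.prems(2) c' by auto
      moreover have "w \<in> V" using w c' insert vbl_sub by auto
      ultimately show "z w = z' w" using ag w by auto
    qed
    then show "z \<in> E' \<longleftrightarrow> z' \<in> E'" unfolding E'_def openz_def using z z' by auto
  qed
  have ind: "card (Oc \<inter> E') * card P = card Oc * card E'"
    unfolding P_def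
    by (rule indep_card[OF finV D2_fin vbl_sub[OF c]]) (use depOc depE in \<open>auto simp: Oc_def E'_def P_def\<close>)
  have Ppos: "0 < real (card P)" using PiE_D2_pos[OF v] unfolding P_def by simp
  have r0: "0 \<le> rho" unfolding rho_def by simp
  have "real (card (Oc \<inter> E')) * card P = real (card Oc) * card E'" using ind by (metis of_nat_mult)
  also have "\<dots> \<le> (rho * card P) * (rho^card Os * card P)"
    using one IH r0 by (intro mult_mono) auto
  finally have "real (card (Oc \<inter> E')) * card P \<le> (rho * rho^card Os * card P) * card P" by (simp add: algebra_simps)
  then have "real (card (Oc \<inter> E')) \<le> rho * rho^card Os * card P" using Ppos by simp
  then show ?case using insert eq unfolding P_def by simp
qed

lemma chain_bound:
  assumes v: "v \<in> V" and rs: "rs \<in> CH"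
  shows "real (card {z \<in> Gv v. \<forall>c\<in>set rs. openz z c}) \<le> (2*rho)^((length rs + 1) div 2) * card (Gv v)"
proof -
  define Idx where "Idx = {i. i < length rs \<and> even i}"
  define Os where "Os = (\<lambda>i. rs!i) ` Idx"
  define P where "P = PiE V (D2 v)"
  define E where "E = {z \<in> P. \<forall>c\<in>Os. openz z c}"
  define I where "I = (\<Union>c\<in>Os. vbl c)"
  define T1 where "T1 = {t\<in>TT. vbl (fst t) \<inter> I \<noteq> {}}"
  have sep: "csep vbl rs" and rsC: "set rs \<subseteq> C" using rs unfolding CH_def chains_def by auto
  have dist: "distinct rs" using csep_distinct[OF sep] .
  have inj: "inj_on (\<lambda>i. rs!i) Idx" unfolding Idx_def using dist by (auto intro!: inj_onI simp: nth_eq_iff_index_eq)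
  have cardO: "card Os = (length rs + 1) div 2"
  proof -
    have "card Os = card Idx" unfolding Os_def by (rule card_image[OF inj])
    then show ?thesis unfolding Idx_def using card_even_less by simp
  qed
  have OC: "Os \<subseteq> C" unfolding Os_def Idx_def using rsC by auto
  have finO: "finite Os" unfolding Os_def Idx_def by simp
  have disj: "\<forall>c\<in>Os. \<forall>c'\<in>Os. c \<noteq> c' \<longrightarrow> vbl c \<inter> vbl c' = {}"
  proof (intro ballI impI)
    fix c c' assume c: "c \<in> Os" and c': "c' \<in> Os" and ne: "c \<noteq> c'"
    obtain i where i: "i \<in> Idx" "c = rs!i" using c unfolding Os_def by auto
    obtain j where j: "j \<in> Idx" "c' = rs!j" using c' unfolding Os_def by auto
    have "i \<noteq> j" using ne i j by auto
    then consider "i < j" | "j < i" by linarith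
    then show "vbl c \<inter> vbl c' = {}"
    proof cases
      case 1
      moreover have "Suc i \<noteq> j" using i j unfolding Idx_def by auto
      ultimately have "Suc i < j" by (rule Suc_lessI)
      then show ?thesis using sep j i unfolding csep_def Idx_def by auto
    next
      case 2
      moreover have "Suc j \<noteq> i" using i j unfolding Idx_def by auto
      ultimately have "Suc j < i" by (rule Suc_lessI)
      then have "vbl (rs!j) \<inter> vbl (rs!i) = {}" using sep i unfolding csep_def Idx_def by auto
      then show ?thesis using i(2) j(2) by auto
    qed
  qed
  have cE: "real (card E) \<le> rho^card Os * card P"
    using multi_open[OF v finO OC disj] unfolding E_def P_def .
  have EP: "E \<subseteq> P" unfolding E_def by auto
  have IV: "I \<subseteq> V" unfolding I_def using OC vbl_sub by auto
  have depE: "dep_on P I E" unfolding dep_on_def E_def I_def openz_def by auto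
  have hss: "real (card (E \<inter> Gv v)) * card P * (1-2*pp)^card T1 \<le> real (card E) * card (Gv v)"
    using lll_setting.HSS[OF lll EP[unfolded P_def] depE[unfolded P_def] IV] Gv_eq unfolding T1_def P_def by simp
  have cT1: "card T1 \<le> 2*k*d * card Os"
  proof -
    have finI: "finite I" using IV finV finite_subset by blast
    have "T1 \<subseteq> {c\<in>C. vbl c \<inter> I \<noteq> {}} \<times> UNIV" unfolding T1_def TT_def by auto
    then have "card T1 \<le> card ({c\<in>C. vbl c \<inter> I \<noteq> {}} \<times> (UNIV::bool set))"
      using finC by (intro card_mono) auto
    also have "\<dots> = 2 * card {c\<in>C. vbl c \<inter> I \<noteq> {}}" by (simp add: card_cartesian_product)
    also have "card {c\<in>C. vbl c \<inter> I \<noteq> {}} \<le> (\<Sum>w\<in>I. card {c\<in>C. w \<in> vbl c})"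
    proof -
      have "{c\<in>C. vbl c \<inter> I \<noteq> {}} = (\<Union>w\<in>I. {c\<in>C. w \<in> vbl c})" by auto
      then show ?thesis using card_UN_le[OF finI, of "\<lambda>w. {c\<in>C. w \<in> vbl c}"] by simp
    qed
    also have "\<dots> \<le> (\<Sum>w\<in>I. d)" using deg IV by (intro sum_mono) auto
    also have "\<dots> = card I * d" by simp
    also have "card I \<le> (\<Sum>c\<in>Os. card (vbl c))" unfolding I_def using finO by (rule card_UN_le)
    also have "\<dots> = (\<Sum>c\<in>Os. k)" using OC vbl_card by (intro sum.cong) auto
    also have "\<dots> = card Os * k" by simp
    finally show ?thesis by (simp add: algebra_simps)
  qed
  have half: "(1/2)^card Os \<le> (1-2*pp)^card T1"
  proof -
    have "(1/2::real)^card Os \<le> ((1-2*pp)^(2*k*d))^card Os"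
      using lll_setting.Dgp[OF lll] by (intro power_mono) auto
    also have "\<dots> = (1-2*pp)^(2*k*d*card Os)" by (simp add: power_mult)
    also have "\<dots> \<le> (1-2*pp)^card T1" using cT1 pp_bounds by (intro power_decreasing) auto
    finally show ?thesis .
  qed
  have Ppos: "0 < real (card P)" using PiE_D2_pos[OF v] unfolding P_def by simp
  have "real (card (E \<inter> Gv v)) * card P * (1/2)^card Os \<le> real (card (E \<inter> Gv v)) * card P * (1-2*pp)^card T1"
    using half by (intro mult_left_mono) auto
  also have "\<dots> \<le> real (card E) * card (Gv v)" by (rule hss)
  also have "\<dots> \<le> rho^card Os * card P * card (Gv v)" using cE by (intro mult_right_mono) auto
  finally have "real (card (E \<inter> Gv v)) * (1/2)^card Os * card P \<le> (rho^card Os * card (Gv v)) * card P"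
    by (simp add: algebra_simps)
  then have "real (card (E \<inter> Gv v)) * (1/2)^card Os \<le> rho^card Os * card (Gv v)"
    using Ppos by simp
  note prev = this
  have hh: "(1/2::real)^card Os * 2^card Os = 1" by (simp add: power_mult_distrib[symmetric])
  have "real (card (E \<inter> Gv v)) = real (card (E \<inter> Gv v)) * ((1/2)^card Os * 2^card Os)" using hh by simp
  also have "\<dots> = (real (card (E \<inter> Gv v)) * (1/2)^card Os) * 2^card Os" by (simp only: mult.assoc)
  also have "\<dots> \<le> (rho^card Os * card (Gv v)) * 2^card Os" using prev by (intro mult_right_mono) auto
  also have "\<dots> = (2*rho)^card Os * card (Gv v)" by (simp add: power_mult_distrib)
  finally have key: "real (card (E \<inter> Gv v)) \<le> (2*rho)^card Os * card (Gv v)" .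
  have "{z \<in> Gv v. \<forall>c\<in>set rs. openz z c} \<subseteq> E \<inter> Gv v"
  proof
    fix z assume z: "z \<in> {z \<in> Gv v. \<forall>c\<in>set rs. openz z c}"
    have "z \<in> P" using z Gv_iff unfolding P_def by auto
    moreover have "\<forall>c\<in>Os. openz z c" using z unfolding Os_def Idx_def by auto
    ultimately show "z \<in> E \<inter> Gv v" using z unfolding E_def by auto
  qed
  then have "card {z \<in> Gv v. \<forall>c\<in>set rs. openz z c} \<le> card (E \<inter> Gv v)"
    using Gv_fin by (intro card_mono) auto
  then show ?thesis using key cardO by simp
qed

lemma union_bound:
  assumes v: "v \<in> V" and vv0: "v \<noteq> v0"
  shows "real (card {z \<in> Gv v. v \<in> UU z}) \<le> (\<Sum>rs\<in>{rs\<in>CH. v \<in> vbl (hd rs)}. (2*rho)^((length rs + 1) div 2) * card (Gv v))"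
proof -
  define CHv where "CHv = {rs\<in>CH. v \<in> vbl (hd rs)}"
  have finCHv: "finite CHv" using CH_fin unfolding CHv_def by simp
  have sub: "{z \<in> Gv v. v \<in> UU z} \<subseteq> (\<Union>rs\<in>CHv. {z \<in> Gv v. \<forall>c\<in>set rs. openz z c})"
  proof
    fix z assume z: "z \<in> {z \<in> Gv v. v \<in> UU z}"
    then obtain rs where rs: "rs \<in> chains vbl C v0" "\<forall>c\<in>set rs. openz z c" "v \<in> vbl (hd rs)"
      using vv0 unfolding UU_def by auto
    then have "set rs \<subseteq> {c. openz z c}" by auto
    then obtain rs' where rs': "rs' \<in> chains vbl C v0" "set rs' \<subseteq> {c. openz z c}" "v \<in> vbl (hd rs')" "csep vbl rs'"
      using minimal_chain[OF rs(1) _ rs(3)] by blast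
    then have "rs' \<in> CHv" unfolding CHv_def CH_def by auto
    then show "z \<in> (\<Union>rs\<in>CHv. {z \<in> Gv v. \<forall>c\<in>set rs. openz z c})" using rs' z by auto
  qed
  have "card {z \<in> Gv v. v \<in> UU z} \<le> card (\<Union>rs\<in>CHv. {z \<in> Gv v. \<forall>c\<in>set rs. openz z c})"
    using sub finCHv Gv_fin by (intro card_mono) auto
  also have "\<dots> \<le> (\<Sum>rs\<in>CHv. card {z \<in> Gv v. \<forall>c\<in>set rs. openz z c})" using finCHv by (rule card_UN_le)
  finally have "real (card {z \<in> Gv v. v \<in> UU z}) \<le> (\<Sum>rs\<in>CHv. real (card {z \<in> Gv v. \<forall>c\<in>set rs. openz z c}))"
    by (simp flip: of_nat_sum)
  also have "\<dots> \<le> (\<Sum>rs\<in>CHv. (2*rho)^((length rs + 1) div 2) * card (Gv v))"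
    using chain_bound[OF v] unfolding CHv_def by (intro sum_mono) auto
  finally show ?thesis unfolding CHv_def .
qed

end

lemma geo3: "(\<Sum>n\<in>{1..N}. (1/3::real)^n) = 1/2 - (1/2) * (1/3)^N"
proof (induction N)
  case 0 then show ?case by simp
next
  case (Suc N)
  have "(\<Sum>n\<in>{1..Suc N}. (1/3::real)^n) = (\<Sum>n\<in>{1..N}. (1/3::real)^n) + (1/3)^Suc N" by simp
  also have "\<dots> = 1/2 - (1/2) * (1/3)^N + (1/3)^Suc N" using Suc.IH by simp
  also have "\<dots> = 1/2 - (1/2) * (1/3)^Suc N" unfolding power_Suc by linarith
  finally show ?case .
qed

context csp_setting begin

lemma term_bound:
  assumes C: "C \<noteq> {}" and n: "1 \<le> n"
  shows "real (k*d)^n * (2*rho)^((n+1) div 2) \<le> (1/3)^n"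
proof -
  obtain c where c: "c \<in> C" using C by auto
  note mf = main_facts[OF c]
  have kd1: "1 * 1 \<le> k * d" using mf by (intro mult_le_mono) auto
  have "real 1 \<le> real (k*d)" using kd1 by (intro of_nat_mono) simp
  then have t1: "1 \<le> real (k*d)" by simp
  define t where "t = real (k*d)"
  define j where "j = (n+1) div 2"
  have nj: "n \<le> 2*j" unfolding j_def by simp
  have tpos: "0 < t" using t1 t_def by simp
  have rt: "rho = 1/(18*t^2)" unfolding rho_def t_def by simp
  have r: "2 * rho * t^2 = 1/9" using tpos unfolding rt by (simp add: field_simps)
  have r0: "0 \<le> 2*rho" unfolding rho_def by simp
  have "t^n * (2*rho)^j \<le> t^(2*j) * (2*rho)^j"
    using t1 nj r0 unfolding t_def by (intro mult_right_mono power_increasing) auto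
  also have "\<dots> = (2 * rho * t^2)^j"
  proof -
    have "t^(2*j) = (t^2)^j" by (simp add: power_mult)
    then show ?thesis by (simp add: power_mult_distrib)
  qed
  also have "\<dots> = (1/9)^j" by (simp only: r)
  also have "\<dots> = (1/3)^(2*j)" unfolding power_mult by (simp add: power2_eq_square)
  also have "\<dots> \<le> (1/3)^n" using nj by (intro power_decreasing) auto
  finally show ?thesis unfolding t_def j_def .
qed

lemma total_bound:
  "(\<Sum>v\<in>V - {v0}. (\<Sum>rs\<in>{rs\<in>CH. v \<in> vbl (hd rs)}. (2*rho)^((length rs + 1) div 2))) \<le> 1/2"
proof (cases "C = {}")
  case True
  then have "CH = {}" unfolding CH_def chains_def by auto
  then show ?thesis by simp
next
  case False
  define w where "w = (\<lambda>rs::'c list. (2*rho)^((length rs + 1) div 2))"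
  have w0: "0 \<le> w rs" for rs unfolding w_def rho_def by simp
  have finV': "finite (V - {v0})" using finV by simp
  have "(\<Sum>v\<in>V - {v0}. (\<Sum>rs\<in>{rs\<in>CH. v \<in> vbl (hd rs)}. w rs))
      = (\<Sum>v\<in>V - {v0}. (\<Sum>rs\<in>CH. if v \<in> vbl (hd rs) then w rs else 0))"
    using CH_fin by (simp add: sum.inter_filter)
  also have "\<dots> = (\<Sum>rs\<in>CH. (\<Sum>v\<in>V - {v0}. if v \<in> vbl (hd rs) then w rs else 0))"
    by (rule sum.swap)
  also have "\<dots> = (\<Sum>rs\<in>CH. real (card {v\<in>V - {v0}. v \<in> vbl (hd rs)}) * w rs)"
    using finV' by (simp add: sum.inter_filter[symmetric])
  also have "\<dots> \<le> (\<Sum>rs\<in>CH. real k * w rs)"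
  proof (intro sum_mono mult_right_mono w0)
    fix rs assume rs: "rs \<in> CH"
    then have hC: "hd rs \<in> C" unfolding CH_def chains_def by (auto intro: hd_in_set)
    have fv: "finite (vbl (hd rs))" using vbl_sub[OF hC] finV finite_subset by blast
    have "card {v\<in>V - {v0}. v \<in> vbl (hd rs)} \<le> card (vbl (hd rs))" using fv by (intro card_mono) auto
    then show "real (card {v\<in>V - {v0}. v \<in> vbl (hd rs)}) \<le> real k" using vbl_card[OF hC] by simp
  qed
  also have "\<dots> = real k * (\<Sum>rs\<in>CH. w rs)" by (simp add: sum_distrib_left)
  also have "(\<Sum>rs\<in>CH. w rs) = (\<Sum>n\<in>{1..card C}. (\<Sum>rs\<in>{rs\<in>CH. length rs = n}. w rs))"
    by (rule sum.group[symmetric]) (use CH_fin CH_len in auto)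
  also have "\<dots> \<le> (\<Sum>n\<in>{1..card C}. real (d * (k*d)^(n-1)) * (2*rho)^((n + 1) div 2))"
  proof (intro sum_mono)
    fix n assume n: "n \<in> {1..card C}"
    have "(\<Sum>rs\<in>{rs\<in>CH. length rs = n}. w rs) = real (card {rs\<in>CH. length rs = n}) * (2*rho)^((n + 1) div 2)"
      unfolding w_def by simp
    also have "\<dots> \<le> real (d * (k*d)^(n-1)) * (2*rho)^((n + 1) div 2)"
    proof (intro mult_right_mono)
      have "card {rs\<in>CH. length rs = n} \<le> card {rs \<in> chains vbl C v0. length rs = Suc (n-1)}"
      proof (rule card_mono)
        have "{rs \<in> chains vbl C v0. length rs = Suc (n-1)} \<subseteq> {rs. set rs \<subseteq> C \<and> length rs = Suc (n-1)}"
          unfolding chains_def by auto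
        then show "finite {rs \<in> chains vbl C v0. length rs = Suc (n-1)}"
          using finite_lists_length_eq[OF finC] finite_subset by blast
        show "{rs\<in>CH. length rs = n} \<subseteq> {rs \<in> chains vbl C v0. length rs = Suc (n-1)}"
          using n unfolding CH_def by auto
      qed
      also have "\<dots> \<le> d * (k*d)^(n-1)"
      proof (rule chains_count[OF finC])
        show "card {c \<in> C. w \<in> vbl c} \<le> d" for w
        proof (cases "w \<in> V")
          case True then show ?thesis by (rule deg)
        next
          case False
          then have "{c \<in> C. w \<in> vbl c} = {}" using vbl_sub by auto
          then have "card {c \<in> C. w \<in> vbl c} = 0" by (simp only: card.empty)
          then show ?thesis by simp
        qed
        show "card (vbl c) \<le> k" if "c \<in> C" for c using vbl_card[OF that] by simp
        show "finite (vbl c)" if "c \<in> C" for c using vbl_sub[OF that] finV finite_subset by blast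
      qed
      finally show "real (card {rs\<in>CH. length rs = n}) \<le> real (d * (k*d)^(n-1))" by (simp only: of_nat_le_iff)
      show "0 \<le> (2*rho)^((n + 1) div 2)" unfolding rho_def by simp
    qed
    finally show "(\<Sum>rs\<in>{rs\<in>CH. length rs = n}. w rs) \<le> real (d * (k*d)^(n-1)) * (2*rho)^((n + 1) div 2)" .
  qed
  finally have A: "(\<Sum>v\<in>V - {v0}. (\<Sum>rs\<in>{rs\<in>CH. v \<in> vbl (hd rs)}. w rs))
     \<le> real k * (\<Sum>n\<in>{1..card C}. real (d * (k*d)^(n-1)) * (2*rho)^((n + 1) div 2))"
    by (simp add: mult_left_mono)
  have "real k * (\<Sum>n\<in>{1..card C}. real (d * (k*d)^(n-1)) * (2*rho)^((n + 1) div 2))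
      = (\<Sum>n\<in>{1..card C}. real (k*d)^n * (2*rho)^((n + 1) div 2))"
  proof -
    have "real k * (real (d * (k*d)^(n-1)) * (2*rho)^((n + 1) div 2)) = real (k*d)^n * (2*rho)^((n + 1) div 2)"
      if "n \<in> {1..card C}" for n
    proof -
      have "n = Suc (n-1)" using that by simp
      then have "real (k*d)^n = real (k*d) * real (k*d)^(n-1)" by (metis power_Suc)
      then show ?thesis by (simp add: algebra_simps)
    qed
    note eqs = this
    have "real k * (\<Sum>n\<in>{1..card C}. real (d * (k*d)^(n-1)) * (2*rho)^((n + 1) div 2))
       = (\<Sum>n\<in>{1..card C}. real k * (real (d * (k*d)^(n-1)) * (2*rho)^((n + 1) div 2)))"
      by (rule sum_distrib_left)
    also have "\<dots> = (\<Sum>n\<in>{1..card C}. real (k*d)^n * (2*rho)^((n + 1) div 2))"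
      by (rule sum.cong[OF refl eqs])
    finally show ?thesis .
  qed
  also have "\<dots> \<le> (\<Sum>n\<in>{1..card C}. (1/3)^n)"
    using term_bound[OF False] by (intro sum_mono) auto
  also have "\<dots> \<le> 1/2" unfolding geo3 by simp
  finally show ?thesis using A unfolding w_def by linarith
qed

lemma final_sum: "(\<Sum>v\<in>V - {v0}. dTV_cond V q C vbl forb h \<Sigma> v X Y) \<le> 1/2"
proof -
  have "(\<Sum>v\<in>V - {v0}. dTV_cond V q C vbl forb h \<Sigma> v X Y)
     \<le> (\<Sum>v\<in>V - {v0}. (\<Sum>rs\<in>{rs\<in>CH. v \<in> vbl (hd rs)}. (2*rho)^((length rs + 1) div 2)))"
  proof (intro sum_mono)
    fix v assume v: "v \<in> V - {v0}"
    then have vV: "v \<in> V" and vv0: "v \<noteq> v0" by auto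
    have Gp: "0 < real (card (Gv v))" using Gv_pos[OF vV] by simp
    have "dTV_cond V q C vbl forb h \<Sigma> v X Y \<le> real (card {z\<in>Gv v. v \<in> UU z}) / real (card (Gv v))"
      by (rule dTV_le[OF vV vv0])
    also have "\<dots> \<le> (\<Sum>rs\<in>{rs\<in>CH. v \<in> vbl (hd rs)}. (2*rho)^((length rs + 1) div 2) * card (Gv v)) / real (card (Gv v))"
      using union_bound[OF vV vv0] Gp by (intro divide_right_mono) auto
    also have "\<dots> = (\<Sum>rs\<in>{rs\<in>CH. v \<in> vbl (hd rs)}. (2*rho)^((length rs + 1) div 2))"
      using Gp by (simp add: sum_distrib_right[symmetric])
    finally show "dTV_cond V q C vbl forb h \<Sigma> v X Y \<le> (\<Sum>rs\<in>{rs\<in>CH. v \<in> vbl (hd rs)}. (2*rho)^((length rs + 1) div 2))" .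
  qed
  also have "\<dots> \<le> 1/2" by (rule total_bound)
  finally show ?thesis .
qed

end

theorem lemma8p2:
  fixes V :: "'v set" and q k d :: nat and C :: "'c set"
    and vbl :: "'c \<Rightarrow> 'v set" and forb :: "'c \<Rightarrow> 'v \<Rightarrow> nat"
    and h :: "'v \<Rightarrow> nat \<Rightarrow> 'y" and \<Sigma> :: "'v \<Rightarrow> 'y set"
    and \<alpha> \<beta> :: real and X Y :: "'v \<Rightarrow> 'y" and v0 :: 'v
  assumes finV: "finite V" and finC: "finite C"
    and vbl_sub: "\<And>c. c \<in> C \<Longrightarrow> vbl c \<subseteq> V"
    and vbl_card: "\<And>c. c \<in> C \<Longrightarrow> card (vbl c) = k"
    and forb_dom: "\<And>c v. c \<in> C \<Longrightarrow> v \<in> vbl c \<Longrightarrow> forb c v < q"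
    and deg: "\<And>v. v \<in> V \<Longrightarrow> card {c \<in> C. v \<in> vbl c} \<le> d"
    and proj: "\<And>v. v \<in> V \<Longrightarrow> h v ` {..<q} = \<Sigma> v"
    and fiber: "\<And>v y. v \<in> V \<Longrightarrow> y \<in> \<Sigma> v \<Longrightarrow>
        q div card (\<Sigma> v) \<le> card {a \<in> {..<q}. h v a = y} \<and>
        real (card {a \<in> {..<q}. h v a = y}) \<le> real_of_int \<lceil>real q / real (card (\<Sigma> v))\<rceil>"
    and ent_up: "\<And>c. c \<in> C \<Longrightarrow>
        (\<Sum>v\<in>vbl c. log 2 (real_of_int \<lceil>real q / real (card (\<Sigma> v))\<rceil>))
          \<le> \<alpha> * (\<Sum>v\<in>vbl c. log 2 (real q))"
    and ent_low: "\<And>c. c \<in> C \<Longrightarrow>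
        (\<Sum>v\<in>vbl c. log 2 (real (q div card (\<Sigma> v))))
          \<ge> \<beta> * (\<Sum>v\<in>vbl c. log 2 (real q))"
    and \<beta>pos: "0 < \<beta>" and \<beta>\<alpha>: "\<beta> < \<alpha>" and \<alpha>1: "\<alpha> < 1"
    and cond: "real k * log 2 (real q)
        \<ge> (1 / \<beta>) * log 2 (3000 * real q ^ 2 * real d ^ 6 * real k ^ 6)"
    and X: "X \<in> PiE V \<Sigma>" and Y: "Y \<in> PiE V \<Sigma>"
    and v0: "v0 \<in> V" and XY: "\<And>u. u \<in> V - {v0} \<Longrightarrow> X u = Y u"
  shows "(\<Sum>v\<in>V - {v0}. dTV_cond V q C vbl forb h \<Sigma> v X Y) \<le> 1 / 2"
proof (cases "C \<noteq> {} \<and> k = 0")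
  case True
  then obtain c where c: "c \<in> C" and k0: "k = 0" by auto
  have "finite (vbl c)" using vbl_sub[OF c] finV finite_subset by blast
  then have "vbl c = {}" using vbl_card[OF c] k0 by simp
  then have sat0: "sat_assign V q C vbl forb = {}" unfolding sat_assign_def using c by auto
  have "dTV_cond V q C vbl forb h \<Sigma> v X Y = 0" for v
    unfolding dTV_cond_def nu_cond_def sat0 Let_def by simp
  then show ?thesis by simp
next
  case False
  interpret csp_setting V q k d C vbl forb h \<Sigma> \<alpha> \<beta> X Y v0
    by unfold_locales (use assms False in auto)
  show ?thesis using final_sum by simp
qed

end
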